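(* Let $\Gamma$ be a finite connected $4$-valent graph whose automorphism group is transitive on $2$-arcs, and suppose the girth of $\Gamma$ is at most $4$. Then one of the following holds: (1) $\Gamma$ has girth $3$ and $\Gamma\cong K_5$; (2) $\Gamma$ has girth $4$ and $\Gamma\cong K_{4,4}\cong C(4,1)$; (3) $\Gamma$ has girth $4$ and $\Gamma$ is isomorphic to $K_{5,5}-5K_2$, to $Q_4$, or to $BCH$.
   Context: A $2$-arc is a sequence $(v_0,v_1,v_2)$ of vertices with $v_0\sim v_1\sim v_2$ and $v_0\ne v_2$. $K_{5,5}-5K_2$ is the complete bipartite graph $K_{5,5}$ with a perfect matching removed. $Q_4$ is the $4$-dimensional hypercube, i.e. the Cayley graph of $\mathbb{Z}_2^4$ with respect to the four standard basis vectors. $BCH$ (bipartite complement of the Heawood graph) has as vertices the $7$ points and $7$ lines of the Fano plane, a point $p$ being adjacent to a line $L$ iff $p\notin L$. $C(4,1)$ is the lexicographic product of a $4$-cycle with the edgeless graph on $2$ vertices. *)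

theory Defs
  imports Main "HOL-Library.Extended_Nat"
begin

definition fin_graph :: "'a set \<Rightarrow> ('a \<Rightarrow> 'a \<Rightarrow> bool) \<Rightarrow> bool" where
  "fin_graph V E \<longleftrightarrow> finite V \<and> V \<noteq> {} \<and> (\<forall>x y. E x y \<longrightarrow> x \<in> V \<and> y \<in> V)
     \<and> (\<forall>x y. E x y \<longrightarrow> E y x) \<and> (\<forall>x. \<not> E x x)"

definition regular :: "'a set \<Rightarrow> ('a \<Rightarrow> 'a \<Rightarrow> bool) \<Rightarrow> nat \<Rightarrow> bool" where
  "regular V E k \<longleftrightarrow> (\<forall>v\<in>V. card {u. E v u} = k)"

definition connected_graph :: "'a set \<Rightarrow> ('a \<Rightarrow> 'a \<Rightarrow> bool) \<Rightarrow> bool" where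
  "connected_graph V E \<longleftrightarrow> (\<forall>u\<in>V. \<forall>v\<in>V. E\<^sup>*\<^sup>* u v)"

definition graph_aut :: "'a set \<Rightarrow> ('a \<Rightarrow> 'a \<Rightarrow> bool) \<Rightarrow> ('a \<Rightarrow> 'a) \<Rightarrow> bool" where
  "graph_aut V E f \<longleftrightarrow> bij_betw f V V \<and> (\<forall>x\<in>V. \<forall>y\<in>V. E x y \<longleftrightarrow> E (f x) (f y))"

definition two_arc :: "('a \<Rightarrow> 'a \<Rightarrow> bool) \<Rightarrow> 'a \<Rightarrow> 'a \<Rightarrow> 'a \<Rightarrow> bool" where
  "two_arc E a b c \<longleftrightarrow> E a b \<and> E b c \<and> a \<noteq> c"

definition two_arc_transitive :: "'a set \<Rightarrow> ('a \<Rightarrow> 'a \<Rightarrow> bool) \<Rightarrow> bool" where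
  "two_arc_transitive V E \<longleftrightarrow>
     (\<forall>a b c a' b' c'. two_arc E a b c \<longrightarrow> two_arc E a' b' c' \<longrightarrow>
        (\<exists>f. graph_aut V E f \<and> f a = a' \<and> f b = b' \<and> f c = c'))"

definition is_cycle :: "'a set \<Rightarrow> ('a \<Rightarrow> 'a \<Rightarrow> bool) \<Rightarrow> nat \<Rightarrow> (nat \<Rightarrow> 'a) \<Rightarrow> bool" where
  "is_cycle V E n c \<longleftrightarrow> 3 \<le> n \<and> inj_on c {..<n} \<and>
     (\<forall>i<n. c i \<in> V \<and> E (c i) (c (Suc i mod n)))"

text \<open>Girth: length of a shortest cycle (infinity for acyclic graphs).\<close>
definition girth :: "'a set \<Rightarrow> ('a \<Rightarrow> 'a \<Rightarrow> bool) \<Rightarrow> enat" where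
  "girth V E = (INF n \<in> {n. \<exists>c. is_cycle V E n c}. enat n)"

definition graph_iso :: "'a set \<Rightarrow> ('a \<Rightarrow> 'a \<Rightarrow> bool) \<Rightarrow> 'b set \<Rightarrow> ('b \<Rightarrow> 'b \<Rightarrow> bool) \<Rightarrow> bool" where
  "graph_iso V E W F \<longleftrightarrow>
     (\<exists>f. bij_betw f V W \<and> (\<forall>x\<in>V. \<forall>y\<in>V. E x y \<longleftrightarrow> F (f x) (f y)))"

definition K5_V :: "nat set" where "K5_V = {..<5}"
definition K5_E :: "nat \<Rightarrow> nat \<Rightarrow> bool" where "K5_E x y \<longleftrightarrow> x < 5 \<and> y < 5 \<and> x \<noteq> y"

definition K44_V :: "(bool \<times> nat) set" where "K44_V = UNIV \<times> {..<4}"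
definition K44_E :: "bool \<times> nat \<Rightarrow> bool \<times> nat \<Rightarrow> bool" where
  "K44_E x y \<longleftrightarrow> snd x < 4 \<and> snd y < 4 \<and> fst x \<noteq> fst y"

text \<open>K_{5,5} minus the perfect matching {(False,i),(True,i)}\<close>
definition K55m_V :: "(bool \<times> nat) set" where "K55m_V = UNIV \<times> {..<5}"
definition K55m_E :: "bool \<times> nat \<Rightarrow> bool \<times> nat \<Rightarrow> bool" where
  "K55m_E x y \<longleftrightarrow> snd x < 5 \<and> snd y < 5 \<and> fst x \<noteq> fst y \<and> snd x \<noteq> snd y"

text \<open>Q_4: Cayley graph of Z_2^4 w.r.t. the standard basis; vertices are boolean lists of
  length 4, adjacent iff they differ in exactly one coordinate.\<close>
definition Q4_V :: "bool list set" where "Q4_V = {xs. length xs = 4}"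
definition Q4_E :: "bool list \<Rightarrow> bool list \<Rightarrow> bool" where
  "Q4_E xs ys \<longleftrightarrow> length xs = 4 \<and> length ys = 4 \<and> card {i. i < 4 \<and> xs ! i \<noteq> ys ! i} = 1"

text \<open>Fano plane: points 0..6, lines 0..6, line l = {l, l+1, l+3} mod 7.\<close>
definition fano_inc :: "nat \<Rightarrow> nat \<Rightarrow> bool" where
  "fano_inc p l \<longleftrightarrow> p \<in> {l mod 7, (l + 1) mod 7, (l + 3) mod 7}"

definition BCH_V :: "(bool \<times> nat) set" where "BCH_V = UNIV \<times> {..<7}"
definition BCH_E :: "bool \<times> nat \<Rightarrow> bool \<times> nat \<Rightarrow> bool" where
  "BCH_E x y \<longleftrightarrow> snd x < 7 \<and> snd y < 7 \<and>
     ((\<not> fst x \<and> fst y \<and> \<not> fano_inc (snd x) (snd y)) \<or>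
      (fst x \<and> \<not> fst y \<and> \<not> fano_inc (snd y) (snd x)))"

text \<open>C(4,1) = C_4[2K_1]: vertices (i,a), i in Z_4, a in {False,True};
  (i,a) ~ (j,b) iff i, j are adjacent in the 4-cycle.\<close>
definition C41_V :: "(nat \<times> bool) set" where "C41_V = {..<4} \<times> UNIV"
definition C41_E :: "nat \<times> bool \<Rightarrow> nat \<times> bool \<Rightarrow> bool" where
  "C41_E x y \<longleftrightarrow> fst x < 4 \<and> fst y < 4 \<and>
     (fst y = (fst x + 1) mod 4 \<or> fst x = (fst y + 1) mod 4)"

end

theory Submission
  imports Defs
begin


lemma card_less_Suc: "card {i. i < Suc n \<and> P i} = card {i. i < n \<and> P i} + (if P n then 1 else 0)"
proof -
  have "{i. i < Suc n \<and> P i} = {i. i < n \<and> P i} \<union> (if P n then {n} else {})"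
    by (auto simp: less_Suc_eq)
  moreover have "finite {i. i < n \<and> P i}" by auto
  ultimately show ?thesis by (auto simp: card_insert_if)
qed

lemma card4_obtain:
  assumes "card S = 4"
  obtains p q r s where "distinct [p,q,r,s]" "S = {p,q,r,s}"
proof -
  from assms have "S \<noteq> {}" "finite S" by (auto intro: card_ge_0_finite)
  then obtain p where p: "p \<in> S" by blast
  define T where "T = S - {p}"
  have "S = insert p T" "p \<notin> T" "card T = 3" using p assms \<open>finite S\<close> by (auto simp: T_def)
  moreover from \<open>card T = 3\<close> obtain q r s where "T = {q,r,s}" "q \<noteq> r" "r \<noteq> s" "q \<noteq> s"
    by (auto simp: card_3_iff)
  ultimately show ?thesis using that[of p q r s] by auto
qed

locale g4 =
  fixes V :: "'a set" and E :: "'a \<Rightarrow> 'a \<Rightarrow> bool"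
  assumes fg: "fin_graph V E" and reg: "regular V E 4" and conn: "connected_graph V E"
begin

lemma Ein1: "E x y \<Longrightarrow> x \<in> V" using fg by (auto simp: fin_graph_def)
lemma Ein2: "E x y \<Longrightarrow> y \<in> V" using fg by (auto simp: fin_graph_def)
lemma Esym: "E x y \<Longrightarrow> E y x" using fg by (auto simp: fin_graph_def)
lemma Eirr: "\<not> E x x" using fg by (auto simp: fin_graph_def)
lemma Eneq: "E x y \<Longrightarrow> x \<noteq> y" using Eirr by auto
lemma Vfin: "finite V" using fg by (auto simp: fin_graph_def)
lemma Vne: "V \<noteq> {}" using fg by (auto simp: fin_graph_def)

lemma nbr_card: "x \<in> V \<Longrightarrow> card {u. E x u} = 4" using reg by (auto simp: regular_def)

lemma nbr_fin: "finite {u. E x u}"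
  by (rule finite_subset[OF _ Vfin]) (auto dest: Ein2)

lemma no5: "distinct [p,q,r,s,t] \<Longrightarrow> E x p \<Longrightarrow> E x q \<Longrightarrow> E x r \<Longrightarrow> E x s \<Longrightarrow> E x t \<Longrightarrow> False"
proof -
  assume d: "distinct [p,q,r,s,t]" and h: "E x p" "E x q" "E x r" "E x s" "E x t"
  have "{p,q,r,s,t} \<subseteq> {u. E x u}" using h by auto
  hence "card {p,q,r,s,t} \<le> card {u. E x u}" using nbr_fin by (rule card_mono[rotated])
  moreover have "card {p,q,r,s,t} = 5" using d by auto
  moreover have "card {u. E x u} = 4" using nbr_card Ein1 h(1) by blast
  ultimately show False by simp
qed

lemma in4: "distinct [p,q,r,s] \<Longrightarrow> E x p \<Longrightarrow> E x q \<Longrightarrow> E x r \<Longrightarrow> E x s \<Longrightarrow> E x y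
   \<Longrightarrow> y = p \<or> y = q \<or> y = r \<or> y = s"
  using no5[of p q r s y x] by auto

lemma nbrs4: "distinct [p,q,r,s] \<Longrightarrow> E x p \<Longrightarrow> E x q \<Longrightarrow> E x r \<Longrightarrow> E x s
   \<Longrightarrow> {u. E x u} = {p,q,r,s}"
  using in4[of p q r s x] by auto

lemma obtain4:
  assumes "x \<in> V" obtains p q r s where "distinct [p,q,r,s]" "{u. E x u} = {p,q,r,s}"
  using card4_obtain[OF nbr_card[OF assms]] by metis

lemma obtain_fourth:
  assumes "distinct [p,q,r]" "E x p" "E x q" "E x r"
  obtains s where "distinct [p,q,r,s]" "E x s"
proof -
  obtain a b c d where "distinct [a,b,c,d]" and N: "{u. E x u} = {a,b,c,d}"
    using obtain4 Ein1 assms(2) by blast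
  hence "\<exists>s\<in>{a,b,c,d}. s \<notin> {p,q,r}" using assms by (auto dest: sym)
  then obtain s where "s \<in> {a,b,c,d}" "s \<notin> {p,q,r}" by blast
  thus ?thesis using that[of s] N assms(1) by auto
qed

lemma obtain_others:
  assumes "E x v" obtains p q r where "distinct [v,p,q,r]" "E x p" "E x q" "E x r"
proof -
  obtain a b c d where d: "distinct [a,b,c,d]" and N: "{u. E x u} = {a,b,c,d}"
    using obtain4 Ein1 assms by blast
  have "v \<in> {a,b,c,d}" using N assms by auto
  then show ?thesis using that d N
    by (smt (verit, best) distinct_length_2_or_more distinct_singleton insert_iff mem_Collect_eq)
qed

end

lemma (in g4) embed:
  fixes W :: "'b set" and F :: "'b \<Rightarrow> 'b \<Rightarrow> bool" and g :: "'b \<Rightarrow> 'a"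
  assumes Wfin: "finite W" and Wne: "W \<noteq> {}"
    and Wreg: "\<And>x. x \<in> W \<Longrightarrow> card {y. F x y} = 4 \<and> {y. F x y} \<subseteq> W"
    and gV: "g ` W \<subseteq> V" and ginj: "inj_on g W"
    and gE: "\<And>x y. x \<in> W \<Longrightarrow> y \<in> W \<Longrightarrow> F x y \<Longrightarrow> E (g x) (g y)"
  shows "graph_iso V E W F"
proof -
  have N: "{z. E (g x) z} = g ` {y. F x y}" if x: "x \<in> W" for x
  proof -
    have sub: "g ` {y. F x y} \<subseteq> {z. E (g x) z}" using gE x Wreg by blast
    have "card (g ` {y. F x y}) = 4"
      using Wreg[OF x] card_image inj_on_subset[OF ginj] by metis
    moreover have "card {z. E (g x) z} = 4" using nbr_card gV x by blast
    ultimately show ?thesis using sub nbr_fin by (metis card_subset_eq)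
  qed
  have clos: "z \<in> g ` W" if "E (g x) z" "x \<in> W" for x z
    using N[OF that(2)] that Wreg by blast
  obtain w0 where w0: "w0 \<in> W" using Wne by blast
  have "u \<in> g ` W" if "u \<in> V" for u
  proof -
    have "E\<^sup>*\<^sup>* (g w0) u" using conn that gV w0 by (auto simp: connected_graph_def)
    thus ?thesis
      by (induction rule: rtranclp_induct) (use w0 clos in auto)
  qed
  hence bij: "bij_betw g W V" using gV ginj by (auto simp: bij_betw_def)
  define f where "f = inv_into W g"
  have fb: "bij_betw f V W" using bij_betw_inv_into[OF bij] f_def by simp
  have "E x y \<longleftrightarrow> F (f x) (f y)" if "x \<in> V" "y \<in> V" for x y
  proof -
    have fx: "f x \<in> W" "g (f x) = x" using fb that bij f_def
      by (auto simp: bij_betw_def f_inv_into_f)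
    have fy: "f y \<in> W" "g (f y) = y" using fb that bij f_def
      by (auto simp: bij_betw_def f_inv_into_f)
    show ?thesis
    proof
      assume "E x y"
      hence "g (f y) \<in> g ` {y. F (f x) y}" using N[OF fx(1)] fx fy by auto
      then obtain y' where "F (f x) y'" "g (f y) = g y'" by auto
      moreover have "y' \<in> W" using Wreg fx(1) calculation by blast
      ultimately show "F (f x) (f y)" using ginj fy(1) by (metis inj_onD)
    next
      assume "F (f x) (f y)" thus "E x y" using gE fx fy by metis
    qed
  qed
  thus ?thesis using fb unfolding graph_iso_def by blast
qed


lemma lt5: "(i::nat) < 5 \<longleftrightarrow> i = 0 \<or> i = 1 \<or> i = 2 \<or> i = 3 \<or> i = 4" by auto
lemma lt4: "(i::nat) < 4 \<longleftrightarrow> i = 0 \<or> i = 1 \<or> i = 2 \<or> i = 3" by auto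
lemma lt7: "(i::nat) < 7 \<longleftrightarrow> i = 0 \<or> i = 1 \<or> i = 2 \<or> i = 3 \<or> i = 4 \<or> i = 5 \<or> i = 6" by auto

lemma K5_V_eq: "K5_V = {0,1,2,3,4}" by (auto simp: K5_V_def)
lemma K5_reg: "x \<in> K5_V \<Longrightarrow> card {y. K5_E x y} = 4 \<and> {y. K5_E x y} \<subseteq> K5_V"
proof -
  assume x: "x \<in> K5_V"
  have "{y. K5_E x y} = {..<5} - {x}" using x by (auto simp: K5_E_def K5_V_def)
  thus ?thesis using x by (auto simp: K5_V_def)
qed

lemma K44_V_eq: "K44_V = {(False,0),(False,1),(False,2),(False,3),(True,0),(True,1),(True,2),(True,3)}"
  by (auto simp: K44_V_def lt4)
lemma K44_reg: "x \<in> K44_V \<Longrightarrow> card {y. K44_E x y} = 4 \<and> {y. K44_E x y} \<subseteq> K44_V"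
proof -
  assume x: "x \<in> K44_V"
  have "{y. K44_E x y} = {\<not> fst x} \<times> {..<4}" using x by (auto simp: K44_E_def K44_V_def)
  thus ?thesis using x by (simp add: K44_V_def card_cartesian_product) blast
qed

lemma K55m_V_eq: "K55m_V = {(False,0),(False,1),(False,2),(False,3),(False,4),(True,0),(True,1),(True,2),(True,3),(True,4)}"
  by (auto simp: K55m_V_def lt5)
lemma K55m_reg: "x \<in> K55m_V \<Longrightarrow> card {y. K55m_E x y} = 4 \<and> {y. K55m_E x y} \<subseteq> K55m_V"
proof -
  assume x: "x \<in> K55m_V"
  have "{y. K55m_E x y} = {\<not> fst x} \<times> ({..<5} - {snd x})" using x by (auto simp: K55m_E_def K55m_V_def)
  moreover have "snd x < 5" using x by (auto simp: K55m_V_def mem_Times_iff)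
  ultimately show ?thesis by (simp add: K55m_V_def card_cartesian_product) blast
qed

lemma C41_V_eq: "C41_V = {(0,False),(0,True),(1,False),(1,True),(2,False),(2,True),(3,False),(3,True)}"
  by (auto simp: C41_V_def lt4)
lemma C41_reg: "x \<in> C41_V \<Longrightarrow> card {y. C41_E x y} = 4 \<and> {y. C41_E x y} \<subseteq> C41_V"
proof -
  assume x: "x \<in> C41_V"
  then obtain i b where xe: "x = (i,b)" "i < 4" by (auto simp: C41_V_def)
  have "{y. C41_E x y} = {(i+1) mod 4, (i+3) mod 4} \<times> UNIV"
    using xe by (auto simp: C41_E_def lt4)
  moreover have "(i+1) mod 4 \<noteq> (i+3) mod 4" using xe by (auto simp: lt4)
  moreover have "{(i+1) mod 4, (i+3) mod 4} \<times> (UNIV::bool set) \<subseteq> C41_V" by (auto simp: C41_V_def)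
  ultimately show ?thesis by (simp add: card_cartesian_product)
qed

lemma BCH_V_eq: "BCH_V = {(False,0),(False,1),(False,2),(False,3),(False,4),(False,5),(False,6),
   (True,0),(True,1),(True,2),(True,3),(True,4),(True,5),(True,6)}"
  by (auto simp: BCH_V_def lt7)

lemma seven: "(7::nat) = Suc (Suc (Suc (Suc (Suc (Suc (Suc 0))))))" by simp

lemma BCH_reg: "x \<in> BCH_V \<Longrightarrow> card {y. BCH_E x y} = 4 \<and> {y. BCH_E x y} \<subseteq> BCH_V"
proof -
  assume x: "x \<in> BCH_V"
  then obtain b i where xe: "x = (b,i)" "i < 7" by (auto simp: BCH_V_def)
  have sub: "{y. BCH_E x y} \<subseteq> BCH_V" by (auto simp: BCH_E_def BCH_V_def)
  have i7: "i = 0 \<or> i = 1 \<or> i = 2 \<or> i = 3 \<or> i = 4 \<or> i = 5 \<or> i = 6" using xe(2) lt7 by blast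
  show ?thesis
  proof (cases b)
    case True
    have "{y. BCH_E x y} = {False} \<times> {p. p < 7 \<and> \<not> fano_inc p i}" using xe True
      by (auto simp: BCH_E_def mem_Times_iff)
    moreover have "card {p. p < 7 \<and> \<not> fano_inc p i} = 4" 
      using i7 by (elim disjE; hypsubst; simp only: seven card_less_Suc; simp add: fano_inc_def)
    ultimately show ?thesis using sub by (simp add: card_cartesian_product)
  next
    case False
    have "{y. BCH_E x y} = {True} \<times> {l. l < 7 \<and> \<not> fano_inc i l}" using xe False
      by (auto simp: BCH_E_def mem_Times_iff)
    moreover have "card {l. l < 7 \<and> \<not> fano_inc i l} = 4" 
      using i7 by (elim disjE; hypsubst; simp only: seven card_less_Suc; simp add: fano_inc_def)
    ultimately show ?thesis using sub by (simp add: card_cartesian_product)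
  qed
qed

lemma four: "(4::nat) = Suc (Suc (Suc (Suc 0)))" by simp

lemma len4: "length xs = 4 \<longleftrightarrow> (\<exists>a b c d. xs = [a,b,c,d])"
  by (auto simp: length_Suc_conv four)

lemma Q4_E_char: "Q4_E [a,b,c,d] [e,f,g,h] \<longleftrightarrow>
   ([e,f,g,h] = [\<not>a,b,c,d] \<or> [e,f,g,h] = [a,\<not>b,c,d] \<or> [e,f,g,h] = [a,b,\<not>c,d] \<or> [e,f,g,h] = [a,b,c,\<not>d])"
proof -
  have "Q4_E [a,b,c,d] [e,f,g,h] \<longleftrightarrow> card {i. i < 4 \<and> [a,b,c,d] ! i \<noteq> [e,f,g,h] ! i} = 1"
    by (simp add: Q4_E_def)
  also have "card {i. i < 4 \<and> [a,b,c,d] ! i \<noteq> [e,f,g,h] ! i} =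
     (if a \<noteq> e then 1 else 0) + (if b \<noteq> f then 1 else 0) + (if c \<noteq> g then 1 else 0) + (if d \<noteq> h then 1 else 0)"
    by (simp only: four card_less_Suc) simp
  finally show ?thesis by (cases a; cases b; cases c; cases d; cases e; cases f; cases g; cases h; simp)
qed

lemma Q4_nbrs: "{ys. Q4_E [a,b,c,d] ys} = {[\<not>a,b,c,d], [a,\<not>b,c,d], [a,b,\<not>c,d], [a,b,c,\<not>d]}"
proof -
  have "Q4_E [a,b,c,d] ys \<Longrightarrow> length ys = 4" for ys by (simp add: Q4_E_def)
  hence "Q4_E [a,b,c,d] ys \<longleftrightarrow> ys \<in> {[\<not>a,b,c,d], [a,\<not>b,c,d], [a,b,\<not>c,d], [a,b,c,\<not>d]}" for ys
  proof -
    assume l: "\<And>ys. Q4_E [a,b,c,d] ys \<Longrightarrow> length ys = 4"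
    show ?thesis
    proof
      assume q: "Q4_E [a,b,c,d] ys"
      then obtain e f g h where "ys = [e,f,g,h]" using l[OF q] unfolding len4 by blast
      thus "ys \<in> {[\<not>a,b,c,d], [a,\<not>b,c,d], [a,b,\<not>c,d], [a,b,c,\<not>d]}" using q by (simp add: Q4_E_char)
    next
      assume "ys \<in> {[\<not>a,b,c,d], [a,\<not>b,c,d], [a,b,\<not>c,d], [a,b,c,\<not>d]}"
      thus "Q4_E [a,b,c,d] ys" by (auto simp: Q4_E_char)
    qed
  qed
  thus ?thesis by blast
qed

lemma Q4_reg: "x \<in> Q4_V \<Longrightarrow> card {y. Q4_E x y} = 4 \<and> {y. Q4_E x y} \<subseteq> Q4_V"
proof -
  assume "x \<in> Q4_V"
  then obtain a b c d where x: "x = [a,b,c,d]" unfolding Q4_V_def len4 by blast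
  have "card {[\<not>a,b,c,d], [a,\<not>b,c,d], [a,b,\<not>c,d], [a,b,c,\<not>d]} = 4" by auto
  moreover have "{[\<not>a,b,c,d], [a,\<not>b,c,d], [a,b,\<not>c,d], [a,b,c,\<not>d]} \<subseteq> Q4_V" by (simp add: Q4_V_def)
  ultimately show ?thesis unfolding x Q4_nbrs by simp
qed





lemma aut_E: "graph_aut V E f \<Longrightarrow> fin_graph V E \<Longrightarrow> E x y \<Longrightarrow> E (f x) (f y)"
  unfolding graph_aut_def fin_graph_def by blast
lemma aut_V: "graph_aut V E f \<Longrightarrow> x \<in> V \<Longrightarrow> f x \<in> V"
  by (auto simp: graph_aut_def bij_betw_def)
lemma aut_inj: "graph_aut V E f \<Longrightarrow> x \<in> V \<Longrightarrow> y \<in> V \<Longrightarrow> x \<noteq> y \<Longrightarrow> f x \<noteq> f y"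
  by (auto simp: graph_aut_def bij_betw_def inj_on_def)
lemma aut_dist: "graph_aut V E f \<Longrightarrow> set xs \<subseteq> V \<Longrightarrow> distinct xs \<Longrightarrow> distinct (map f xs)"
  by (auto simp: graph_aut_def bij_betw_def distinct_map intro: inj_on_subset)

locale g4t = g4 +
  assumes tat: "two_arc_transitive V E"
begin

lemma get_aut:
  assumes "E a b" "E b c" "a \<noteq> c" "E a' b'" "E b' c'" "a' \<noteq> c'"
  obtains f where "graph_aut V E f" "f a = a'" "f b = b'" "f c = c'"
proof -
  have "two_arc E a b c" "two_arc E a' b' c'" using assms by (simp_all add: two_arc_def)
  from tat[unfolded two_arc_transitive_def, rule_format, OF this] show ?thesis using that by blast
qed

lemma tr_tri:
  assumes "E a b" "E b c" "a \<noteq> c" "E a c" "E a' b'" "E b' c'" "a' \<noteq> c'"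
  shows "E a' c'"
proof -
  obtain f where f: "graph_aut V E f" "f a = a'" "f b = b'" "f c = c'" by (rule get_aut[OF assms(1-3) assms(5-7)])
  show ?thesis using aut_E[OF f(1) fg assms(4)] f by simp
qed

lemma tr_q1:
  assumes "E a b" "E b c" "a \<noteq> c" "w \<noteq> b" "E a w" "E w c" "E a' b'" "E b' c'" "a' \<noteq> c'"
  shows "\<exists>w'. w' \<noteq> b' \<and> E a' w' \<and> E w' c'"
proof -
  obtain f where f: "graph_aut V E f" "f a = a'" "f b = b'" "f c = c'" by (rule get_aut[OF assms(1-3) assms(7-9)])
  have "w \<in> V" "b \<in> V" using Ein2 assms(1,5) by blast+
  hence "f w \<noteq> f b" using aut_inj[OF f(1)] assms(4) by blast
  moreover have "E a' (f w)" "E (f w) c'" using aut_E[OF f(1) fg] assms(5,6) f by auto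
  ultimately show ?thesis using f by (metis (no_types))
qed

lemma tr_q2:
  assumes "E a b" "E b c" "a \<noteq> c" "distinct [b,w1,w2]" "E a w1" "E w1 c" "E a w2" "E w2 c"
    "E a' b'" "E b' c'" "a' \<noteq> c'"
  shows "\<exists>w1' w2'. distinct [b',w1',w2'] \<and> E a' w1' \<and> E w1' c' \<and> E a' w2' \<and> E w2' c'"
proof -
  obtain f where f: "graph_aut V E f" "f a = a'" "f b = b'" "f c = c'" by (rule get_aut[OF assms(1-3) assms(9-11)])
  have "set [b,w1,w2] \<subseteq> V" using Ein2 assms(1,5,7) by auto
  hence "distinct [f b, f w1, f w2]" using aut_dist[OF f(1) _ assms(4)] by simp
  moreover have "E a' (f w1)" "E (f w1) c'" "E a' (f w2)" "E (f w2) c'"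
    using aut_E[OF f(1) fg] assms(5-8) f by auto
  ultimately show ?thesis using f by (metis (no_types))
qed

lemma tr_q3:
  assumes "E a b" "E b c" "a \<noteq> c" "distinct [b,w1,w2,w3]" "E a w1" "E w1 c" "E a w2" "E w2 c"
    "E a w3" "E w3 c" "E a' b'" "E b' c'" "a' \<noteq> c'"
  shows "\<exists>w1' w2' w3'. distinct [b',w1',w2',w3'] \<and> E a' w1' \<and> E w1' c' \<and> E a' w2' \<and> E w2' c'
     \<and> E a' w3' \<and> E w3' c'"
proof -
  obtain f where f: "graph_aut V E f" "f a = a'" "f b = b'" "f c = c'" by (rule get_aut[OF assms(1-3) assms(11-13)])
  have "set [b,w1,w2,w3] \<subseteq> V" using Ein2 assms(1,5,7,9) by auto
  hence "distinct [f b, f w1, f w2, f w3]" using aut_dist[OF f(1) _ assms(4)] by simp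
  moreover have "E a' (f w1)" "E (f w1) c'" "E a' (f w2)" "E (f w2) c'" "E a' (f w3)" "E (f w3) c'"
    using aut_E[OF f(1) fg] assms(5-10) f by auto
  ultimately show ?thesis using f by (metis (no_types))
qed

end

lemma (in g4) caseK5:
  assumes cl: "\<And>a b c. E a b \<Longrightarrow> E b c \<Longrightarrow> a \<noteq> c \<Longrightarrow> E a c"
  shows "graph_iso V E K5_V K5_E"
proof -
  obtain v where v: "v \<in> V" using Vne by blast
  obtain a1 a2 a3 a4 where d: "distinct [a1,a2,a3,a4]" and N: "{u. E v u} = {a1,a2,a3,a4}"
    using obtain4[OF v] by blast
  have e: "E v a1" "E v a2" "E v a3" "E v a4" using N by auto
  have ee: "E a1 v" "E a2 v" "E a3 v" "E a4 v" using Esym[OF e(1)] Esym[OF e(2)] Esym[OF e(3)] Esym[OF e(4)] by auto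
  have e2: "E a1 a2" "E a1 a3" "E a1 a4" "E a2 a3" "E a2 a4" "E a3 a4"
    using cl[OF ee(1) e(2)] cl[OF ee(1) e(3)] cl[OF ee(1) e(4)] cl[OF ee(2) e(3)]
       cl[OF ee(2) e(4)] cl[OF ee(3) e(4)] d by auto
  have es: "E a1 v" "E a2 v" "E a3 v" "E a4 v" "E a2 a1" "E a3 a1" "E a4 a1" "E a3 a2" "E a4 a2" "E a4 a3"
    using ee Esym[OF e2(1)] Esym[OF e2(2)] Esym[OF e2(3)] Esym[OF e2(4)] Esym[OF e2(5)] Esym[OF e2(6)] by auto
  have dv: "v \<noteq> a1" "v \<noteq> a2" "v \<noteq> a3" "v \<noteq> a4" using e Eneq by auto
  define g where "g = (\<lambda>i::nat. [v,a1,a2,a3,a4] ! i)"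
  show ?thesis
  proof (rule embed[where g = g])
    show "finite K5_V" "K5_V \<noteq> {}" by (auto simp: K5_V_eq)
    show "\<And>x. x \<in> K5_V \<Longrightarrow> card {y. K5_E x y} = 4 \<and> {y. K5_E x y} \<subseteq> K5_V" by (rule K5_reg)
    show "g ` K5_V \<subseteq> V" using v Ein2[OF e(1)] Ein2[OF e(2)] Ein2[OF e(3)] Ein2[OF e(4)] by (auto simp: K5_V_eq g_def)
    show "inj_on g K5_V" using d dv by (auto simp: K5_V_eq g_def inj_on_def)
    show "\<And>x y. x \<in> K5_V \<Longrightarrow> y \<in> K5_V \<Longrightarrow> K5_E x y \<Longrightarrow> E (g x) (g y)"
      using e e2 es by (auto simp: K5_V_eq g_def K5_E_def)
  qed
qed


lemma girth_le: "girth V E \<le> 4 \<Longrightarrow> \<exists>n c. is_cycle V E n c \<and> n \<le> 4"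
proof -
  assume g: "girth V E \<le> 4"
  let ?S = "{n. \<exists>c. is_cycle V E n c}"
  have "?S \<noteq> {}"
  proof
    assume "?S = {}" hence "girth V E = \<infinity>" by (simp add: girth_def top_enat_def)
    thus False using g by simp
  qed
  then obtain n where n: "n \<in> ?S" by blast
  have "\<exists>m\<in>?S. enat m \<le> 4"
  proof (rule ccontr)
    assume a: "\<not> ?thesis"
    have "enat 5 \<le> enat m" if "m \<in> ?S" for m
    proof -
      have "\<not> m \<le> 4" using a that by (auto simp: numeral_eq_enat)
      thus ?thesis by simp
    qed
    hence "enat 5 \<le> girth V E" unfolding girth_def by (rule INF_greatest)
    moreover have "girth V E \<le> enat 4" using g by (simp add: numeral_eq_enat)
    ultimately have "enat 5 \<le> enat 4" by (rule order_trans)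
    thus False by simp
  qed
  thus ?thesis by (auto simp: numeral_eq_enat)
qed

lemma girth_eq: "k \<in> {n. \<exists>c. is_cycle V E n c} \<Longrightarrow> (\<And>n c. is_cycle V E n c \<Longrightarrow> k \<le> n) \<Longrightarrow> girth V E = enat k"
  unfolding girth_def by (rule antisym) (auto intro: INF_lower INF_greatest)

lemma all3: "(\<forall>i<3::nat. P i) \<longleftrightarrow> P 0 \<and> P 1 \<and> P 2"
  by (auto simp: less_Suc_eq numeral_eq_Suc)
lemma all4: "(\<forall>i<4::nat. P i) \<longleftrightarrow> P 0 \<and> P 1 \<and> P 2 \<and> P 3"
  by (auto simp: less_Suc_eq numeral_eq_Suc)
lemma lt3_set: "{..<3::nat} = {0,1,2}" by auto
lemma lt4_set: "{..<4::nat} = {0,1,2,3}" by auto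

lemma cyc3: "is_cycle V E 3 c \<Longrightarrow> E (c 0) (c 1) \<and> E (c 1) (c 2) \<and> E (c 2) (c 0)"
  unfolding is_cycle_def all3 by (simp add: numeral_2_eq_2)

lemma cyc4: "is_cycle V E 4 c \<Longrightarrow> E (c 0) (c 1) \<and> E (c 1) (c 2) \<and> E (c 2) (c 3) \<and> E (c 3) (c 0)
   \<and> distinct [c 0, c 1, c 2, c 3]"
proof -
  assume "is_cycle V E 4 c"
  hence h: "\<forall>i<4. c i \<in> V \<and> E (c i) (c (Suc i mod 4))" and i: "inj_on c {0,1,2,3}"
    by (auto simp: is_cycle_def lt4_set)
  have "E (c 0) (c 1)" using h[rule_format, of 0] by simp
  moreover have "E (c 1) (c 2)" using h[rule_format, of 1] by (simp add: numeral_2_eq_2)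
  moreover have "E (c 2) (c 3)" using h[rule_format, of 2] by simp
  moreover have "E (c 3) (c 0)" using h[rule_format, of 3] by simp
  moreover have "distinct [c 0, c 1, c 2, c 3]" using i unfolding inj_on_def by auto
  ultimately show ?thesis by blast
qed

lemma tri_cyc: "E x y \<Longrightarrow> E y z \<Longrightarrow> E z x \<Longrightarrow> distinct [x,y,z] \<Longrightarrow> x \<in> V \<Longrightarrow> y \<in> V \<Longrightarrow> z \<in> V
  \<Longrightarrow> is_cycle V E 3 (\<lambda>i. [x,y,z] ! i)"
  unfolding is_cycle_def all3 lt3_set by (auto simp: inj_on_def)

lemma sq_cyc: "E x y \<Longrightarrow> E y z \<Longrightarrow> E z w \<Longrightarrow> E w x \<Longrightarrow> distinct [x,y,z,w] \<Longrightarrow> x \<in> V \<Longrightarrow> y \<in> V \<Longrightarrow> z \<in> V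
  \<Longrightarrow> w \<in> V \<Longrightarrow> is_cycle V E 4 (\<lambda>i. [x,y,z,w] ! i)"
  unfolding is_cycle_def all4 lt4_set inj_on_def by auto


context g4
begin

lemma pick3:
  assumes "distinct [p,q,r,s]" "distinct [p,w1,w2,w3]" "w1 \<in> {p,q,r,s}" "w2 \<in> {p,q,r,s}" "w3 \<in> {p,q,r,s}"
  shows "q \<in> {w1,w2,w3} \<and> r \<in> {w1,w2,w3} \<and> s \<in> {w1,w2,w3}"
  using assms by auto

lemma caseK44:
  assumes P4: "\<And>a b c. E a b \<Longrightarrow> E b c \<Longrightarrow> a \<noteq> c \<Longrightarrow> \<exists>w1 w2 w3. distinct [b,w1,w2,w3] \<and>
     E a w1 \<and> E w1 c \<and> E a w2 \<and> E w2 c \<and> E a w3 \<and> E w3 c"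
  shows "graph_iso V E K44_V K44_E \<and> graph_iso V E C41_V C41_E"
proof -
  obtain v where v: "v \<in> V" using Vne by blast
  obtain a1 a2 a3 a4 where d: "distinct [a1,a2,a3,a4]" and N: "{u. E v u} = {a1,a2,a3,a4}"
    using obtain4[OF v] by blast
  have e: "E v a1" "E v a2" "E v a3" "E v a4" using N by auto
  obtain b1 b2 b3 where db: "distinct [v,b1,b2,b3]" and eb: "E a1 b1" "E a1 b2" "E a1 b3"
    using obtain_others[OF Esym[OF e(1)]] by blast
  have ab: "E a2 b \<and> E a3 b \<and> E a4 b" if b: "E a1 b" "v \<noteq> b" for b
  proof -
    obtain w1 w2 w3 where w: "distinct [a1,w1,w2,w3]" "E v w1" "E w1 b" "E v w2" "E w2 b" "E v w3" "E w3 b"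
      using P4[OF e(1) b(1) b(2)] by blast
    have "w1 \<in> {a1,a2,a3,a4}" "w2 \<in> {a1,a2,a3,a4}" "w3 \<in> {a1,a2,a3,a4}" using N w by auto
    hence "a2 \<in> {w1,w2,w3} \<and> a3 \<in> {w1,w2,w3} \<and> a4 \<in> {w1,w2,w3}" using pick3[OF d w(1)] by blast
    thus ?thesis using w by auto
  qed
  have eb1: "E a2 b1" "E a3 b1" "E a4 b1" using ab[OF eb(1)] db by auto
  have eb2: "E a2 b2" "E a3 b2" "E a4 b2" using ab[OF eb(2)] db by auto
  have eb3: "E a2 b3" "E a3 b3" "E a4 b3" using ab[OF eb(3)] db by auto
  note E1 = e eb eb1 eb2 eb3
  have E2: "E a1 v" "E a2 v" "E a3 v" "E a4 v" "E b1 a1" "E b2 a1" "E b3 a1" "E b1 a2" "E b1 a3" "E b1 a4"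
    "E b2 a2" "E b2 a3" "E b2 a4" "E b3 a2" "E b3 a3" "E b3 a4"
    using Esym[OF e(1)] Esym[OF e(2)] Esym[OF e(3)] Esym[OF e(4)] Esym[OF eb(1)] Esym[OF eb(2)] Esym[OF eb(3)]
      Esym[OF eb1(1)] Esym[OF eb1(2)] Esym[OF eb1(3)] Esym[OF eb2(1)] Esym[OF eb2(2)] Esym[OF eb2(3)]
      Esym[OF eb3(1)] Esym[OF eb3(2)] Esym[OF eb3(3)] by auto
  have D: "v \<noteq> a1" "v \<noteq> a2" "v \<noteq> a3" "v \<noteq> a4" "b1 \<noteq> a1" "b1 \<noteq> a2" "b1 \<noteq> a3" "b1 \<noteq> a4"
    "b2 \<noteq> a1" "b2 \<noteq> a2" "b2 \<noteq> a3" "b2 \<noteq> a4" "b3 \<noteq> a1" "b3 \<noteq> a2" "b3 \<noteq> a3" "b3 \<noteq> a4"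
    using E2 Eneq by blast+
  have inV: "v \<in> V" "a1 \<in> V" "a2 \<in> V" "a3 \<in> V" "a4 \<in> V" "b1 \<in> V" "b2 \<in> V" "b3 \<in> V"
    using v Ein2[OF e(1)] Ein2[OF e(2)] Ein2[OF e(3)] Ein2[OF e(4)] Ein2[OF eb(1)] Ein2[OF eb(2)] Ein2[OF eb(3)] by auto
  define g where "g = (\<lambda>(b::bool,i::nat). if b then (if i=0 then a1 else if i=1 then a2 else if i=2 then a3 else a4)
     else (if i=0 then v else if i=1 then b1 else if i=2 then b2 else b3))"
  have iso1: "graph_iso V E K44_V K44_E"
  proof (rule embed[where g = g])
    show "finite K44_V" "K44_V \<noteq> {}" by (auto simp: K44_V_eq)
    show "\<And>x. x \<in> K44_V \<Longrightarrow> card {y. K44_E x y} = 4 \<and> {y. K44_E x y} \<subseteq> K44_V" by (rule K44_reg)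
    show "g ` K44_V \<subseteq> V" using inV by (auto simp: K44_V_eq g_def)
    show "inj_on g K44_V" using d db D by (auto simp: K44_V_eq g_def inj_on_def)
    show "\<And>x y. x \<in> K44_V \<Longrightarrow> y \<in> K44_V \<Longrightarrow> K44_E x y \<Longrightarrow> E (g x) (g y)"
      using E1 E2 by (auto simp: K44_V_eq g_def K44_E_def)
  qed
  define h where "h = (\<lambda>(i::nat,b::bool). if i = 0 then (if b then b1 else v) else if i = 1 then (if b then a2 else a1)
     else if i = 2 then (if b then b3 else b2) else (if b then a4 else a3))"
  have iso2: "graph_iso V E C41_V C41_E"
  proof (rule embed[where g = h])
    show "finite C41_V" "C41_V \<noteq> {}" by (auto simp: C41_V_eq)
    show "\<And>x. x \<in> C41_V \<Longrightarrow> card {y. C41_E x y} = 4 \<and> {y. C41_E x y} \<subseteq> C41_V" by (rule C41_reg)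
    show "h ` C41_V \<subseteq> V" using inV by (auto simp: C41_V_eq h_def)
    show "inj_on h C41_V" using d db D by (auto simp: C41_V_eq h_def inj_on_def)
    show "\<And>x y. x \<in> C41_V \<Longrightarrow> y \<in> C41_V \<Longrightarrow> C41_E x y \<Longrightarrow> E (h x) (h y)"
      using E1 E2 by (auto simp: C41_V_eq h_def C41_E_def)
  qed
  show ?thesis using iso1 iso2 by blast
qed
end


context g4
begin

lemma caseK55:
  assumes tf: "\<And>x y z. E x y \<Longrightarrow> E y z \<Longrightarrow> \<not> E x z"
  and P3: "\<And>a b c. E a b \<Longrightarrow> E b c \<Longrightarrow> a \<noteq> c \<Longrightarrow> \<exists>w1 w2. distinct [b,w1,w2] \<and>
     E a w1 \<and> E w1 c \<and> E a w2 \<and> E w2 c"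
  and nP4: "\<And>a b c w1 w2 w3. E a b \<Longrightarrow> E b c \<Longrightarrow> a \<noteq> c \<Longrightarrow> distinct [b,w1,w2,w3] \<Longrightarrow>
     E a w1 \<Longrightarrow> E w1 c \<Longrightarrow> E a w2 \<Longrightarrow> E w2 c \<Longrightarrow> E a w3 \<Longrightarrow> E w3 c \<Longrightarrow> False"
  shows "graph_iso V E K55m_V K55m_E"
proof -
  obtain v where v: "v \<in> V" using Vne by blast
  obtain a1 a2 a3 a4 where d: "distinct [a1,a2,a3,a4]" and N: "{u. E v u} = {a1,a2,a3,a4}"
    using obtain4[OF v] by blast
  have e: "E v a1" "E v a2" "E v a3" "E v a4" using N by auto
  have ee: "E a1 v" "E a2 v" "E a3 v" "E a4 v" using Esym[OF e(1)] Esym[OF e(2)] Esym[OF e(3)] Esym[OF e(4)] by auto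
  have naa: "\<not> E a1 a2" "\<not> E a1 a3" "\<not> E a1 a4" "\<not> E a2 a3" "\<not> E a2 a4" "\<not> E a3 a4"
     "\<not> E a2 a1" "\<not> E a3 a1" "\<not> E a4 a1" "\<not> E a3 a2" "\<not> E a4 a2" "\<not> E a4 a3"
    using tf ee e by blast+
  have two: "\<exists>w1 w2. distinct [p,w1,w2] \<and> w1 \<in> {a1,a2,a3,a4} \<and> w2 \<in> {a1,a2,a3,a4} \<and> E w1 t \<and> E w2 t"
    if h: "E v p" "E p t" "v \<noteq> t" for p t
  proof -
    obtain w1 w2 where w: "distinct [p,w1,w2]" "E v w1" "E w1 t" "E v w2" "E w2 t" using P3[OF h] by blast
    thus ?thesis using N by blast
  qed
  obtain x y z where dxyz: "distinct [v,x,y,z]" and ex: "E a1 x" "E a1 y" "E a1 z"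
    using obtain_others[OF ee(1)] by blast
  have row: "(E a2 t \<and> E a3 t) \<or> (E a2 t \<and> E a4 t) \<or> (E a3 t \<and> E a4 t)" if h: "E a1 t" "v \<noteq> t" for t
  proof -
    obtain w1 w2 where w: "distinct [a1,w1,w2]" "w1 \<in> {a1,a2,a3,a4}" "w2 \<in> {a1,a2,a3,a4}" "E w1 t" "E w2 t"
      using two[OF e(1) h] by blast
    thus ?thesis using d by auto
  qed
  have rown: "\<not> (E a2 t \<and> E a3 t \<and> E a4 t)" if "E a1 t" "v \<noteq> t" for t
    using nP4[OF e(1) that(1) that(2), of a2 a3 a4] d e by auto
  have col: "\<not> (E q x \<and> E q y \<and> E q z)" if "q \<in> {a2,a3,a4}" for q
  proof
    assume h: "E q x \<and> E q y \<and> E q z"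
    have q: "E v q" "a1 \<noteq> q" using that e d by auto
    have "E x q" "E y q" "E z q" using h Esym by auto
    thus False using nP4[OF ee(1) q(1) q(2) dxyz ex(1) _ ex(2) _ ex(3)] by blast
  qed

  have "\<exists>b\<in>{x,y,z}. \<not> E a2 b" using col[of a2] by auto
  then obtain b2 where b2: "b2 \<in> {x,y,z}" "\<not> E a2 b2" by blast
  have "\<exists>b\<in>{x,y,z}. \<not> E a3 b" using col[of a3] by auto
  then obtain b3 where b3: "b3 \<in> {x,y,z}" "\<not> E a3 b3" by blast
  have "\<exists>b\<in>{x,y,z}. \<not> E a4 b" using col[of a4] by auto
  then obtain b4 where b4: "b4 \<in> {x,y,z}" "\<not> E a4 b4" by blast
  have e1b: "E a1 b2" "E a1 b3" "E a1 b4" "v \<noteq> b2" "v \<noteq> b3" "v \<noteq> b4" using b2 b3 b4 ex dxyz by auto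
  have eb2: "E a3 b2" "E a4 b2" using row[OF e1b(1) e1b(4)] b2(2) by auto
  have eb3: "E a2 b3" "E a4 b3" using row[OF e1b(2) e1b(5)] b3(2) by auto
  have eb4: "E a2 b4" "E a3 b4" using row[OF e1b(3) e1b(6)] b4(2) by auto
  have db: "distinct [v,b2,b3,b4]" using e1b eb2 eb3 eb4 b2 b3 b4 by auto
  have Na1: "{u. E a1 u} = {v,b2,b3,b4}" using nbrs4[OF db ee(1) e1b(1-3)] .
  obtain b1 where db1: "distinct [v,b3,b4,b1]" and eb1: "E a2 b1"
    using obtain_fourth[of v b3 b4 a2] db ee(2) eb3(1) eb4(1) by auto
  have "b1 \<noteq> b2" using eb1 b2(2) by auto
  have na1b1: "\<not> E a1 b1" using Na1 db1 \<open>b1 \<noteq> b2\<close> by auto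
  have "v \<noteq> b1" using db1 by auto
  obtain w1 w2 where w: "distinct [a2,w1,w2]" "w1 \<in> {a1,a2,a3,a4}" "w2 \<in> {a1,a2,a3,a4}" "E w1 b1" "E w2 b1"
    using two[OF e(2) eb1 \<open>v \<noteq> b1\<close>] by blast
  have eb1': "E a3 b1" "E a4 b1" using w na1b1 d by auto
  obtain c where dc: "distinct [a2,a3,a4,c]" and b1c: "E b1 c"
    using obtain_fourth[of a2 a3 a4 b1] d Esym[OF eb1] Esym[OF eb1'(1)] Esym[OF eb1'(2)] by auto
  have nvb1: "\<not> E v b1" using tf[OF e(2) eb1] .
  have ca1: "c \<noteq> a1" using b1c na1b1 Esym by blast
  have nvc: "\<not> E v c" using N dc ca1 by auto
  have cv: "c \<noteq> v" using b1c nvb1 Esym by blast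
  have dd: "distinct [v,b1,b3,b4]" using db1 by auto
  have Na2: "{u. E a2 u} = {v,b1,b3,b4}" using nbrs4[OF dd ee(2) eb1 eb3(1) eb4(1)] .
  have dd3: "distinct [v,b1,b2,b4]" using db db1 \<open>b1 \<noteq> b2\<close> by auto
  have Na3: "{u. E a3 u} = {v,b1,b2,b4}" using nbrs4[OF dd3 ee(3) eb1'(1) eb2(1) eb4(2)] .
  have "a2 \<noteq> c" "a3 \<noteq> c" using dc by auto
  obtain p1 p2 where p: "distinct [b1,p1,p2]" "E a2 p1" "E p1 c" "E a2 p2" "E p2 c"
    using P3[OF eb1 b1c \<open>a2 \<noteq> c\<close>] by blast
  have "p1 \<in> {v,b1,b3,b4}" "p2 \<in> {v,b1,b3,b4}" using Na2 p(2,4) by blast+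
  hence cb34: "E b3 c" "E b4 c" using p nvc by auto
  obtain q1 q2 where q: "distinct [b1,q1,q2]" "E a3 q1" "E q1 c" "E a3 q2" "E q2 c"
    using P3[OF eb1'(1) b1c \<open>a3 \<noteq> c\<close>] by blast
  have "q1 \<in> {v,b1,b2,b4}" "q2 \<in> {v,b1,b2,b4}" using Na3 q(2,4) by blast+
  hence cb2: "E b2 c" using q nvc by auto
  have pos: "E v a1" "E v a2" "E v a3" "E v a4" "E b1 c" "E b2 c" "E b3 c" "E b4 c" "E a1 b2" "E a1 b3" "E a1 b4" "E a2 b1" "E a2 b3" "E a2 b4" "E a3 b1" "E a3 b2" "E a3 b4" "E a4 b1" "E a4 b2" "E a4 b3"
    using e b1c cb2 cb34 e1b eb1 eb1' eb2 eb3 eb4 by auto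
  have sym: "E a1 v" "E a2 v" "E a3 v" "E a4 v" "E c b1" "E c b2" "E c b3" "E c b4" "E b2 a1" "E b3 a1" "E b4 a1" "E b1 a2" "E b3 a2" "E b4 a2" "E b1 a3" "E b2 a3" "E b4 a3" "E b1 a4" "E b2 a4" "E b3 a4"
    using Esym[OF pos(1)] Esym[OF pos(2)] Esym[OF pos(3)] Esym[OF pos(4)] Esym[OF pos(5)] Esym[OF pos(6)] Esym[OF pos(7)] Esym[OF pos(8)] Esym[OF pos(9)] Esym[OF pos(10)] Esym[OF pos(11)] Esym[OF pos(12)] Esym[OF pos(13)] Esym[OF pos(14)] Esym[OF pos(15)] Esym[OF pos(16)] Esym[OF pos(17)] Esym[OF pos(18)] Esym[OF pos(19)] Esym[OF pos(20)] by auto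
  have D: "distinct [v,b1,b2,b3,b4]" "distinct [c,a1,a2,a3,a4]" "v \<noteq> c"
    "b1 \<noteq> a1" "b2 \<noteq> a2" "b3 \<noteq> a3" "b4 \<noteq> a4"
    using db db1 \<open>b1 \<noteq> b2\<close> d dc ca1 cv eb1 eb2 eb3 eb4 e1b naa by auto
  have D2: "v \<noteq> a1" "v \<noteq> a2" "v \<noteq> a3" "v \<noteq> a4" "b1 \<noteq> c" "b2 \<noteq> c" "b3 \<noteq> c" "b4 \<noteq> c"
    "b1 \<noteq> a2" "b1 \<noteq> a3" "b1 \<noteq> a4" "b2 \<noteq> a1" "b2 \<noteq> a3" "b2 \<noteq> a4"
    "b3 \<noteq> a1" "b3 \<noteq> a2" "b3 \<noteq> a4" "b4 \<noteq> a1" "b4 \<noteq> a2" "b4 \<noteq> a3"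
    using pos Eneq by metis+
  have inV: "v \<in> V" "a1 \<in> V" "a2 \<in> V" "a3 \<in> V" "a4 \<in> V" "b1 \<in> V" "b2 \<in> V" "b3 \<in> V" "b4 \<in> V" "c \<in> V"
    using v pos(1-4) pos(5-8) Ein1 Ein2 by metis+
  define g where "g = (\<lambda>(b::bool,i::nat). if b then (if i=0 then c else if i=1 then a1 else if i=2 then a2 else if i=3 then a3 else a4)
     else (if i=0 then v else if i=1 then b1 else if i=2 then b2 else if i=3 then b3 else b4))"
  show ?thesis
  proof (rule embed[where g = g])
    show "finite K55m_V" "K55m_V \<noteq> {}" by (auto simp: K55m_V_eq)
    show "\<And>x. x \<in> K55m_V \<Longrightarrow> card {y. K55m_E x y} = 4 \<and> {y. K55m_E x y} \<subseteq> K55m_V" by (rule K55m_reg)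
    show "g ` K55m_V \<subseteq> V" using inV by (auto simp: K55m_V_eq g_def)
    show "inj_on g K55m_V" using D D2 by (auto simp: K55m_V_eq g_def inj_on_def)
    show "\<And>x y. x \<in> K55m_V \<Longrightarrow> y \<in> K55m_V \<Longrightarrow> K55m_E x y \<Longrightarrow> E (g x) (g y)"
      using pos sym by (auto simp: K55m_V_eq g_def K55m_E_def)
  qed
qed
end


locale g4L2 = g4 +
  assumes tf: "\<And>x y z. E x y \<Longrightarrow> E y z \<Longrightarrow> \<not> E x z"
  and quad: "\<And>x y z. E x y \<Longrightarrow> E y z \<Longrightarrow> x \<noteq> z \<Longrightarrow> \<exists>w. w \<noteq> y \<and> E x w \<and> E w z"
  and U: "\<And>x y z w1 w2. E x y \<Longrightarrow> E y z \<Longrightarrow> x \<noteq> z \<Longrightarrow> w1 \<noteq> y \<Longrightarrow> w2 \<noteq> y \<Longrightarrow>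
     E x w1 \<Longrightarrow> E w1 z \<Longrightarrow> E x w2 \<Longrightarrow> E w2 z \<Longrightarrow> w1 = w2"
begin

lemma L1: "E c p \<Longrightarrow> E c q \<Longrightarrow> E c r \<Longrightarrow> distinct [p,q,r] \<Longrightarrow> E p u \<Longrightarrow> E q u \<Longrightarrow> E r u \<Longrightarrow> u \<noteq> c \<Longrightarrow> False"
  using U[of c p u q r] by auto

lemma neqI: "E x p \<Longrightarrow> \<not> E y p \<Longrightarrow> x \<noteq> y" by auto

definition frame where
  "frame v a1 a2 a3 a4 u12 u13 u14 u23 u24 u34 \<longleftrightarrow> distinct [a1,a2,a3,a4] \<and>
     E v a1 \<and> E v a2 \<and> E v a3 \<and> E v a4 \<and>
     E a1 u12 \<and> E a2 u12 \<and> E a1 u13 \<and> E a3 u13 \<and> E a1 u14 \<and> E a4 u14 \<and>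
     E a2 u23 \<and> E a3 u23 \<and> E a2 u24 \<and> E a4 u24 \<and> E a3 u34 \<and> E a4 u34 \<and>
     u12 \<noteq> v \<and> u13 \<noteq> v \<and> u14 \<noteq> v \<and> u23 \<noteq> v \<and> u24 \<noteq> v \<and> u34 \<noteq> v"

lemma frame_perm:
  assumes "frame v a1 a2 a3 a4 u12 u13 u14 u23 u24 u34"
  shows "frame v a1 a3 a2 a4 u13 u12 u14 u23 u34 u24"
    "frame v a2 a3 a1 a4 u23 u12 u24 u13 u34 u14"
    "frame v a1 a2 a4 a3 u12 u14 u13 u24 u23 u34"
    "frame v a1 a4 a2 a3 u14 u12 u13 u24 u34 u23"
    "frame v a1 a3 a4 a2 u13 u14 u12 u34 u23 u24"
    "frame v a1 a4 a3 a2 u14 u13 u12 u34 u24 u23"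
  using assms unfolding frame_def by auto

lemma frame_F2:
  assumes "frame v a1 a2 a3 a4 u12 u13 u14 u23 u24 u34"
  shows "\<not> E a3 u12" "\<not> E a4 u12" "\<not> E a2 u13" "\<not> E a4 u13" "\<not> E a2 u14" "\<not> E a3 u14"
        "\<not> E a1 u23" "\<not> E a4 u23" "\<not> E a1 u24" "\<not> E a3 u24" "\<not> E a1 u34" "\<not> E a2 u34"
proof -
  have f: "distinct [a1,a2,a3,a4]" "E v a1" "E v a2" "E v a3" "E v a4"
     "E a1 u12" "E a2 u12" "E a1 u13" "E a3 u13" "E a1 u14" "E a4 u14"
     "E a2 u23" "E a3 u23" "E a2 u24" "E a4 u24" "E a3 u34" "E a4 u34"
     "u12 \<noteq> v" "u13 \<noteq> v" "u14 \<noteq> v" "u23 \<noteq> v" "u24 \<noteq> v" "u34 \<noteq> v"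
    using assms unfolding frame_def by auto
  note L = L1[of v]
  show "\<not> E a3 u12" using L[of a1 a2 a3 u12] f by auto
  show "\<not> E a4 u12" using L[of a1 a2 a4 u12] f by auto
  show "\<not> E a2 u13" using L[of a1 a3 a2 u13] f by auto
  show "\<not> E a4 u13" using L[of a1 a3 a4 u13] f by auto
  show "\<not> E a2 u14" using L[of a1 a4 a2 u14] f by auto
  show "\<not> E a3 u14" using L[of a1 a4 a3 u14] f by auto
  show "\<not> E a1 u23" using L[of a2 a3 a1 u23] f by auto
  show "\<not> E a4 u23" using L[of a2 a3 a4 u23] f by auto
  show "\<not> E a1 u24" using L[of a2 a4 a1 u24] f by auto
  show "\<not> E a3 u24" using L[of a2 a4 a3 u24] f by auto
  show "\<not> E a1 u34" using L[of a3 a4 a1 u34] f by auto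
  show "\<not> E a2 u34" using L[of a3 a4 a2 u34] f by auto
qed

lemma frame_E:
  assumes "frame v a1 a2 a3 a4 u12 u13 u14 u23 u24 u34"
  shows "distinct [a1,a2,a3,a4]" "E v a1" "E v a2" "E v a3" "E v a4"
     "E a1 u12" "E a2 u12" "E a1 u13" "E a3 u13" "E a1 u14" "E a4 u14"
     "E a2 u23" "E a3 u23" "E a2 u24" "E a4 u24" "E a3 u34" "E a4 u34"
     "u12 \<noteq> v" "u13 \<noteq> v" "u14 \<noteq> v" "u23 \<noteq> v" "u24 \<noteq> v" "u34 \<noteq> v"
  using assms unfolding frame_def by auto

lemma frame_du:
  assumes "frame v a1 a2 a3 a4 u12 u13 u14 u23 u24 u34"
  shows "distinct [u12,u13,u14,u23,u24,u34]"
  using frame_E[OF assms] frame_F2[OF assms] by auto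

end


context g4L2
begin

lemma L_tri:
  assumes F: "frame v a1 a2 a3 a4 u12 u13 u14 u23 u24 u34"
  and W: "E W u12" "E W u13" "E W u23"
  shows "\<exists>X. E X u12 \<and> E X u14 \<and> E X u24"
proof -
  note f = frame_E[OF F] and n = frame_F2[OF F] and du = frame_du[OF F]
  have "u12 \<noteq> u14" "u12 \<noteq> u24" "distinct [u12,u13,u14]" "distinct [u12,u23,u24]" using du by auto
  obtain X where X: "X \<noteq> a1" "E u12 X" "E X u14" using quad[OF Esym[OF f(6)] f(10) \<open>u12 \<noteq> u14\<close>] by blast
  have Wa1: "W \<noteq> a1" using W(3) n(7) by auto
  have Wa2: "W \<noteq> a2" using W(2) n(3) by auto
  have d3: "distinct [a1,a2,W]" using f(1) Wa1 Wa2 by auto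
  obtain t where dt: "distinct [a1,a2,W,t]" "E u12 t"
    using obtain_fourth[OF d3 Esym[OF f(6)] Esym[OF f(7)] Esym[OF W(1)]] by blast
  have i4: "y = a1 \<or> y = a2 \<or> y = W \<or> y = t" if "E u12 y" for y
    using in4[OF dt(1) Esym[OF f(6)] Esym[OF f(7)] Esym[OF W(1)] dt(2) that] .
  have "X \<noteq> a2" using X(3) n(5) by auto
  moreover have "X \<noteq> W"
  proof
    assume "X = W" hence h: "E W u14" using X by simp
    show False using L1[OF f(6) f(8) f(10) \<open>distinct [u12,u13,u14]\<close> Esym[OF W(1)] Esym[OF W(2)] Esym[OF h] Wa1] .
  qed
  ultimately have Xt: "X = t" using X(1) i4[OF X(2)] by blast
  obtain Y where Y: "Y \<noteq> a2" "E u12 Y" "E Y u24" using quad[OF Esym[OF f(7)] f(14) \<open>u12 \<noteq> u24\<close>] by blast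
  have "Y \<noteq> a1" using Y(3) n(9) by auto
  moreover have "Y \<noteq> W"
  proof
    assume "Y = W" hence h: "E W u24" using Y by simp
    show False using L1[OF f(7) f(12) f(14) \<open>distinct [u12,u23,u24]\<close> Esym[OF W(1)] Esym[OF W(3)] Esym[OF h] Wa2] .
  qed
  ultimately have Yt: "Y = t" using Y(1) i4[OF Y(2)] by blast
  show ?thesis using X Y Xt Yt Esym[OF dt(2)] by blast
qed

lemma L_path:
  assumes F: "frame v a1 a2 a3 a4 u12 u13 u14 u23 u24 u34"
  and X: "E X u12" "E X u13" "X \<noteq> a1" "\<not> E X u23"
  shows "E X u24"
proof -
  note f = frame_E[OF F] and n = frame_F2[OF F] and du = frame_du[OF F]
  have "u12 \<noteq> u23" "u12 \<noteq> u24" "distinct [u12,u23,u24]" using du by auto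
  have Xa2: "X \<noteq> a2" using X(2) n(3) by auto
  have d3: "distinct [a1,a2,X]" using f(1) X(3) Xa2 by auto
  obtain t where dt: "distinct [a1,a2,X,t]" "E u12 t"
    using obtain_fourth[OF d3 Esym[OF f(6)] Esym[OF f(7)] Esym[OF X(1)]] by blast
  have i4: "y = a1 \<or> y = a2 \<or> y = X \<or> y = t" if "E u12 y" for y
    using in4[OF dt(1) Esym[OF f(6)] Esym[OF f(7)] Esym[OF X(1)] dt(2) that] .
  obtain Y where Y: "Y \<noteq> a2" "E u12 Y" "E Y u23" using quad[OF Esym[OF f(7)] f(12) \<open>u12 \<noteq> u23\<close>] by blast
  have "Y \<noteq> a1" using Y(3) n(7) by auto
  moreover have "Y \<noteq> X" using Y(3) X(4) by auto
  ultimately have Yt: "Y = t" using Y(1) i4[OF Y(2)] by blast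
  obtain Z where Z: "Z \<noteq> a2" "E u12 Z" "E Z u24" using quad[OF Esym[OF f(7)] f(14) \<open>u12 \<noteq> u24\<close>] by blast
  have "Z \<noteq> a1" using Z(3) n(9) by auto
  moreover have "Z \<noteq> t"
  proof
    assume "Z = t"
    hence "E t u24" "E t u23" "E t u12" using Z Y Yt Esym[OF dt(2)] by auto
    moreover have "t \<noteq> a2" using dt(1) by auto
    ultimately show False using L1[OF f(7) f(12) f(14) \<open>distinct [u12,u23,u24]\<close>] Esym by blast
  qed
  ultimately have "Z = X" using Z(1) i4[OF Z(2)] by blast
  thus ?thesis using Z by simp
qed

lemma L_z:
  assumes F: "frame v a1 a2 a3 a4 u12 u13 u14 u23 u24 u34"
  and W: "E W u12" "E W u13" "E W u23"
  and W': "E W' u12" "E W' u14" "E W' u24"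
  and z: "E W z" "z \<noteq> u12" "z \<noteq> u13" "z \<noteq> u23"
  shows "E z W'"
proof -
  note f = frame_E[OF F] and n = frame_F2[OF F] and du = frame_du[OF F]
  have dd: "distinct [u12,u13,u14]" "distinct [u12,u23,u24]" using du by auto
  have Wa1: "W \<noteq> a1" using W(3) n(7) by auto
  have Wa2: "W \<noteq> a2" using W(2) n(3) by auto
  have W'a1: "W' \<noteq> a1" using W'(3) n(9) by auto
  have W'a2: "W' \<noteq> a2" using W'(2) n(5) by auto
  have WW': "W \<noteq> W'"
  proof
    assume "W = W'" hence h: "E W u14" using W' by simp
    show False using L1[OF f(6) f(8) f(10) dd(1) Esym[OF W(1)] Esym[OF W(2)] Esym[OF h] Wa1] .
  qed
  have d4: "distinct [a1,a2,W,W']" using f(1) Wa1 Wa2 W'a1 W'a2 WW' by auto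
  have i4: "y = a1 \<or> y = a2 \<or> y = W \<or> y = W'" if "E u12 y" for y
    using in4[OF d4 Esym[OF f(6)] Esym[OF f(7)] Esym[OF W(1)] Esym[OF W'(1)] that] .
  have nvW: "\<not> E W v"
  proof
    assume h: "E W v"
    have "distinct [a1,a2,W]" using d4 by auto
    thus False using L1[OF Esym[OF f(6)] Esym[OF f(7)] Esym[OF W(1)] _ Esym[OF f(2)] Esym[OF f(3)] h] f(18) by blast
  qed
  have "u12 \<noteq> z" using z(2) by auto
  obtain y where y: "y \<noteq> W" "E u12 y" "E y z" using quad[OF Esym[OF W(1)] z(1) \<open>u12 \<noteq> z\<close>] by blast
  have dv1: "distinct [v,u12,u13,u14]" "distinct [v,u12,u23,u24]" using du f by auto
  have "y \<noteq> a1"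
  proof
    assume "y = a1" hence h: "E a1 z" using y by simp
    have "z = v \<or> z = u12 \<or> z = u13 \<or> z = u14"
      using in4[OF dv1(1) Esym[OF f(2)] f(6) f(8) f(10) h] .
    moreover have "z \<noteq> v" using z(1) nvW by auto
    moreover have "z \<noteq> u14"
    proof
      assume "z = u14" hence h2: "E W u14" using z by simp
      show False using L1[OF f(6) f(8) f(10) dd(1) Esym[OF W(1)] Esym[OF W(2)] Esym[OF h2] Wa1] .
    qed
    ultimately show False using z by blast
  qed
  moreover have "y \<noteq> a2"
  proof
    assume "y = a2" hence h: "E a2 z" using y by simp
    have "z = v \<or> z = u12 \<or> z = u23 \<or> z = u24"
      using in4[OF dv1(2) Esym[OF f(3)] f(7) f(12) f(14) h] .
    moreover have "z \<noteq> v" using z(1) nvW by auto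
    moreover have "z \<noteq> u24"
    proof
      assume "z = u24" hence h2: "E W u24" using z by simp
      show False using L1[OF f(7) f(12) f(14) dd(2) Esym[OF W(1)] Esym[OF W(3)] Esym[OF h2] Wa2] .
    qed
    ultimately show False using z by blast
  qed
  ultimately have "y = W'" using i4[OF y(2)] y(1) by blast
  thus ?thesis using y(3) Esym by blast
qed

end


context g4L2
begin

lemma L1n: "E c p \<Longrightarrow> E c q \<Longrightarrow> E c r \<Longrightarrow> distinct [p,q,r] \<Longrightarrow> E p u \<Longrightarrow> E q u \<Longrightarrow> u \<noteq> c \<Longrightarrow> \<not> E r u"
  using L1[of c p q r u] by blast

lemma nsym: "\<not> E x y \<Longrightarrow> \<not> E y x" using Esym by blast

definition hq where "hq v a1 a2 a3 a4 u12 u13 u14 u23 u24 u34 X W124 W134 W234 z =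
  (\<lambda>b1 b2 b3 b4. if b1 then (if b2 then (if b3 then (if b4 then z else X) else (if b4 then W124 else u12))
     else (if b3 then (if b4 then W134 else u13) else (if b4 then u14 else a1)))
   else (if b2 then (if b3 then (if b4 then W234 else u23) else (if b4 then u24 else a2))
     else (if b3 then (if b4 then u34 else a3) else (if b4 then a4 else v))))"

lemma caseQ4:
  assumes F: "frame v a1 a2 a3 a4 u12 u13 u14 u23 u24 u34"
  and X: "X \<noteq> a1" "E u12 X" "E X u13" "E X u23"
  shows "graph_iso V E Q4_V Q4_E"
proof -
  note f = frame_E[OF F] and n = frame_F2[OF F] and du = frame_du[OF F]
  note d = f(1)
  obtain W124 where W124: "E W124 u12" "E W124 u14" "E W124 u24"
    using L_tri[OF F, of X] X Esym by blast
  obtain W134 where W134: "E W134 u13" "E W134 u14" "E W134 u34"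
    using L_tri[OF frame_perm(1)[OF F], of X] X Esym by blast
  obtain W234 where W234: "E W234 u23" "E W234 u24" "E W234 u34"
    using L_tri[OF frame_perm(2)[OF F], of X] X Esym by blast
  have d3: "distinct [u12,u13,u23]" using du by auto
  obtain z where dz: "distinct [u12,u13,u23,z]" and Xz: "E X z"
    using obtain_fourth[OF d3 Esym[OF X(2)] X(3) X(4)] by blast
  have z1: "E z W124" using L_z[OF F _ _ _ W124(1) W124(2) W124(3) Xz] X Esym dz by auto
  have z2: "E z W134" using L_z[OF frame_perm(1)[OF F] _ _ _ W134(1) W134(2) W134(3) Xz] X Esym dz by auto
  have z3: "E z W234" using L_z[OF frame_perm(2)[OF F] _ _ _ W234(1) W234(2) W234(3) Xz] X Esym dz by auto
  show ?thesis
  proof -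
    have pos: "E v a1" "E v a2" "E v a3" "E v a4" "E a1 u12" "E a1 u13" "E a1 u14" "E a2 u12" "E a2 u23" "E a2 u24" "E a3 u13" "E a3 u23" "E a3 u34" "E a4 u14" "E a4 u24" "E a4 u34" "E u12 X" "E u12 W124" "E u13 X" "E u13 W134" "E u14 W124" "E u14 W134" "E u23 X" "E u23 W234" "E u24 W124" "E u24 W234" "E u34 W134" "E u34 W234" "E X z" "E W124 z" "E W134 z" "E W234 z"
      using f X W124 W134 W234 Xz z1 z2 z3 Esym by auto
    have D0: "X \<noteq> a1" "X \<noteq> a2" "X \<noteq> a3" "X \<noteq> a4" "W124 \<noteq> a1" "W124 \<noteq> a2" "W124 \<noteq> a3" "W124 \<noteq> a4" "W134 \<noteq> a1" "W134 \<noteq> a2" "W134 \<noteq> a3" "W134 \<noteq> a4" "W234 \<noteq> a1" "W234 \<noteq> a2" "W234 \<noteq> a3" "W234 \<noteq> a4"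
      using neqI[OF Esym[OF pos(23)] n(7)] neqI[OF Esym[OF pos(19)] n(3)] neqI[OF Esym[OF pos(17)] n(1)] neqI[OF Esym[OF pos(17)] n(2)] neqI[OF Esym[OF pos(25)] n(9)] neqI[OF Esym[OF pos(21)] n(5)] neqI[OF Esym[OF pos(18)] n(1)] neqI[OF Esym[OF pos(18)] n(2)] neqI[OF Esym[OF pos(27)] n(11)] neqI[OF Esym[OF pos(20)] n(3)] neqI[OF Esym[OF pos(22)] n(6)] neqI[OF Esym[OF pos(20)] n(4)] neqI[OF Esym[OF pos(24)] n(7)] neqI[OF Esym[OF pos(28)] n(12)] neqI[OF Esym[OF pos(26)] n(10)] neqI[OF Esym[OF pos(24)] n(8)] by auto
    have nv_X: "\<not> E X v" using L1n[OF Esym[OF pos(5)] Esym[OF pos(8)] pos(17) _ Esym[OF pos(1)] Esym[OF pos(2)]] d D0 f(18) by auto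
    have nv_W124: "\<not> E W124 v" using L1n[OF Esym[OF pos(5)] Esym[OF pos(8)] pos(18) _ Esym[OF pos(1)] Esym[OF pos(2)]] d D0 f(18) by auto
    have nv_W134: "\<not> E W134 v" using L1n[OF Esym[OF pos(6)] Esym[OF pos(11)] pos(20) _ Esym[OF pos(1)] Esym[OF pos(3)]] d D0 f(19) by auto
    have nv_W234: "\<not> E W234 v" using L1n[OF Esym[OF pos(9)] Esym[OF pos(12)] pos(24) _ Esym[OF pos(2)] Esym[OF pos(3)]] d D0 f(21) by auto
    have nW_X_u14: "\<not> E u14 X" using L1n[OF pos(5) pos(6) pos(7) _ pos(17) pos(19)] du D0 by auto
    have nW_X_u24: "\<not> E u24 X" using L1n[OF pos(8) pos(9) pos(10) _ pos(17) pos(23)] du D0 by auto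
    have nW_X_u34: "\<not> E u34 X" using L1n[OF pos(11) pos(12) pos(13) _ pos(19) pos(23)] du D0 by auto
    have nW_W124_u13: "\<not> E u13 W124" using L1n[OF pos(5) pos(7) pos(6) _ pos(18) pos(21)] du D0 by auto
    have nW_W124_u23: "\<not> E u23 W124" using L1n[OF pos(8) pos(10) pos(9) _ pos(18) pos(25)] du D0 by auto
    have nW_W124_u34: "\<not> E u34 W124" using L1n[OF pos(14) pos(15) pos(16) _ pos(21) pos(25)] du D0 by auto
    have nW_W134_u12: "\<not> E u12 W134" using L1n[OF pos(6) pos(7) pos(5) _ pos(20) pos(22)] du D0 by auto
    have nW_W134_u23: "\<not> E u23 W134" using L1n[OF pos(11) pos(13) pos(12) _ pos(20) pos(27)] du D0 by auto
    have nW_W134_u24: "\<not> E u24 W134" using L1n[OF pos(14) pos(16) pos(15) _ pos(22) pos(27)] du D0 by auto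
    have nW_W234_u12: "\<not> E u12 W234" using L1n[OF pos(9) pos(10) pos(8) _ pos(24) pos(26)] du D0 by auto
    have nW_W234_u13: "\<not> E u13 W234" using L1n[OF pos(12) pos(13) pos(11) _ pos(24) pos(28)] du D0 by auto
    have nW_W234_u14: "\<not> E u14 W234" using L1n[OF pos(15) pos(16) pos(14) _ pos(26) pos(28)] du D0 by auto
    have D_1: "v \<noteq> a1" using Eneq[OF pos(1)] by auto
    have D_2: "v \<noteq> a2" using Eneq[OF pos(2)] by auto
    have D_3: "v \<noteq> a3" using Eneq[OF pos(3)] by auto
    have D_4: "v \<noteq> a4" using Eneq[OF pos(4)] by auto
    have D_5: "v \<noteq> u12" using not_sym[OF f(18)] by auto
    have D_6: "v \<noteq> u13" using not_sym[OF f(19)] by auto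
    have D_7: "v \<noteq> u14" using not_sym[OF f(20)] by auto
    have D_8: "v \<noteq> u23" using not_sym[OF f(21)] by auto
    have D_9: "v \<noteq> u24" using not_sym[OF f(22)] by auto
    have D_10: "v \<noteq> u34" using not_sym[OF f(23)] by auto
    have D_11: "v \<noteq> X" using neqI[OF pos(1) tf[OF Esym[OF pos(17)] Esym[OF pos(5)]]] by auto
    have D_12: "v \<noteq> W124" using neqI[OF pos(1) tf[OF Esym[OF pos(21)] Esym[OF pos(7)]]] by auto
    have D_13: "v \<noteq> W134" using neqI[OF pos(1) tf[OF Esym[OF pos(22)] Esym[OF pos(7)]]] by auto
    have D_14: "v \<noteq> W234" using neqI[OF pos(2) tf[OF Esym[OF pos(26)] Esym[OF pos(10)]]] by auto
    have D_15: "v \<noteq> z" using not_sym[OF neqI[OF Esym[OF pos(30)] nsym[OF nv_W124]]] by auto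
    have D_16: "a1 \<noteq> a2" using d by auto
    have D_17: "a1 \<noteq> a3" using d by auto
    have D_18: "a1 \<noteq> a4" using d by auto
    have D_19: "a1 \<noteq> u12" using Eneq[OF pos(5)] by auto
    have D_20: "a1 \<noteq> u13" using Eneq[OF pos(6)] by auto
    have D_21: "a1 \<noteq> u14" using Eneq[OF pos(7)] by auto
    have D_22: "a1 \<noteq> u23" using neqI[OF pos(5) tf[OF pos(23) Esym[OF pos(17)]]] by auto
    have D_23: "a1 \<noteq> u24" using neqI[OF pos(5) tf[OF pos(25) Esym[OF pos(18)]]] by auto
    have D_24: "a1 \<noteq> u34" using neqI[OF pos(6) tf[OF Esym[OF pos(13)] pos(11)]] by auto
    have D_25: "a1 \<noteq> X" using neqI[OF pos(7) nsym[OF nW_X_u14]] by auto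
    have D_26: "a1 \<noteq> W124" using neqI[OF pos(6) nsym[OF nW_W124_u13]] by auto
    have D_27: "a1 \<noteq> W134" using neqI[OF pos(5) nsym[OF nW_W134_u12]] by auto
    have D_28: "a1 \<noteq> W234" using neqI[OF pos(5) nsym[OF nW_W234_u12]] by auto
    have D_29: "a1 \<noteq> z" using neqI[OF pos(5) tf[OF Esym[OF pos(29)] Esym[OF pos(17)]]] by auto
    have D_30: "a2 \<noteq> a3" using d by auto
    have D_31: "a2 \<noteq> a4" using d by auto
    have D_32: "a2 \<noteq> u12" using Eneq[OF pos(8)] by auto
    have D_33: "a2 \<noteq> u13" using neqI[OF pos(8) tf[OF Esym[OF pos(6)] pos(5)]] by auto
    have D_34: "a2 \<noteq> u14" using neqI[OF pos(8) tf[OF Esym[OF pos(7)] pos(5)]] by auto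
    have D_35: "a2 \<noteq> u23" using Eneq[OF pos(9)] by auto
    have D_36: "a2 \<noteq> u24" using Eneq[OF pos(10)] by auto
    have D_37: "a2 \<noteq> u34" using neqI[OF pos(9) tf[OF Esym[OF pos(13)] pos(12)]] by auto
    have D_38: "a2 \<noteq> X" using neqI[OF pos(10) nsym[OF nW_X_u24]] by auto
    have D_39: "a2 \<noteq> W124" using neqI[OF pos(9) nsym[OF nW_W124_u23]] by auto
    have D_40: "a2 \<noteq> W134" using neqI[OF pos(8) nsym[OF nW_W134_u12]] by auto
    have D_41: "a2 \<noteq> W234" using neqI[OF pos(8) nsym[OF nW_W234_u12]] by auto
    have D_42: "a2 \<noteq> z" using neqI[OF pos(8) tf[OF Esym[OF pos(29)] Esym[OF pos(17)]]] by auto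
    have D_43: "a3 \<noteq> a4" using d by auto
    have D_44: "a3 \<noteq> u12" using neqI[OF pos(11) tf[OF Esym[OF pos(5)] pos(6)]] by auto
    have D_45: "a3 \<noteq> u13" using Eneq[OF pos(11)] by auto
    have D_46: "a3 \<noteq> u14" using neqI[OF pos(11) tf[OF Esym[OF pos(7)] pos(6)]] by auto
    have D_47: "a3 \<noteq> u23" using Eneq[OF pos(12)] by auto
    have D_48: "a3 \<noteq> u24" using neqI[OF pos(12) tf[OF pos(26) Esym[OF pos(24)]]] by auto
    have D_49: "a3 \<noteq> u34" using Eneq[OF pos(13)] by auto
    have D_50: "a3 \<noteq> X" using neqI[OF pos(13) nsym[OF nW_X_u34]] by auto
    have D_51: "a3 \<noteq> W124" using neqI[OF pos(11) nsym[OF nW_W124_u13]] by auto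
    have D_52: "a3 \<noteq> W134" using neqI[OF pos(12) nsym[OF nW_W134_u23]] by auto
    have D_53: "a3 \<noteq> W234" using neqI[OF pos(11) nsym[OF nW_W234_u13]] by auto
    have D_54: "a3 \<noteq> z" using neqI[OF pos(11) tf[OF Esym[OF pos(29)] Esym[OF pos(19)]]] by auto
    have D_55: "a4 \<noteq> u12" using neqI[OF pos(14) tf[OF Esym[OF pos(5)] pos(7)]] by auto
    have D_56: "a4 \<noteq> u13" using neqI[OF pos(14) tf[OF Esym[OF pos(6)] pos(7)]] by auto
    have D_57: "a4 \<noteq> u14" using Eneq[OF pos(14)] by auto
    have D_58: "a4 \<noteq> u23" using neqI[OF pos(15) tf[OF pos(24) Esym[OF pos(26)]]] by auto
    have D_59: "a4 \<noteq> u24" using Eneq[OF pos(15)] by auto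
    have D_60: "a4 \<noteq> u34" using Eneq[OF pos(16)] by auto
    have D_61: "a4 \<noteq> X" using neqI[OF pos(14) nsym[OF nW_X_u14]] by auto
    have D_62: "a4 \<noteq> W124" using neqI[OF pos(16) nsym[OF nW_W124_u34]] by auto
    have D_63: "a4 \<noteq> W134" using neqI[OF pos(15) nsym[OF nW_W134_u24]] by auto
    have D_64: "a4 \<noteq> W234" using neqI[OF pos(14) nsym[OF nW_W234_u14]] by auto
    have D_65: "a4 \<noteq> z" using neqI[OF pos(14) tf[OF Esym[OF pos(31)] Esym[OF pos(22)]]] by auto
    have D_66: "u12 \<noteq> u13" using neqI[OF pos(18) nW_W124_u13] by auto
    have D_67: "u12 \<noteq> u14" using neqI[OF pos(17) nW_X_u14] by auto
    have D_68: "u12 \<noteq> u23" using neqI[OF pos(18) nW_W124_u23] by auto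
    have D_69: "u12 \<noteq> u24" using neqI[OF pos(17) nW_X_u24] by auto
    have D_70: "u12 \<noteq> u34" using neqI[OF pos(18) nW_W124_u34] by auto
    have D_71: "u12 \<noteq> X" using Eneq[OF pos(17)] by auto
    have D_72: "u12 \<noteq> W124" using Eneq[OF pos(18)] by auto
    have D_73: "u12 \<noteq> W134" using neqI[OF pos(18) tf[OF Esym[OF pos(22)] pos(21)]] by auto
    have D_74: "u12 \<noteq> W234" using neqI[OF pos(18) tf[OF Esym[OF pos(26)] pos(25)]] by auto
    have D_75: "u12 \<noteq> z" using not_sym[OF neqI[OF Esym[OF pos(31)] nW_W134_u12]] by auto
    have D_76: "u13 \<noteq> u14" using neqI[OF pos(19) nW_X_u14] by auto
    have D_77: "u13 \<noteq> u23" using neqI[OF pos(20) nW_W134_u23] by auto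
    have D_78: "u13 \<noteq> u24" using neqI[OF pos(20) nW_W134_u24] by auto
    have D_79: "u13 \<noteq> u34" using neqI[OF pos(19) nW_X_u34] by auto
    have D_80: "u13 \<noteq> X" using Eneq[OF pos(19)] by auto
    have D_81: "u13 \<noteq> W124" using neqI[OF pos(20) tf[OF Esym[OF pos(21)] pos(22)]] by auto
    have D_82: "u13 \<noteq> W134" using Eneq[OF pos(20)] by auto
    have D_83: "u13 \<noteq> W234" using neqI[OF pos(20) tf[OF pos(32) Esym[OF pos(31)]]] by auto
    have D_84: "u13 \<noteq> z" using not_sym[OF neqI[OF Esym[OF pos(30)] nW_W124_u13]] by auto
    have D_85: "u14 \<noteq> u23" using neqI[OF pos(21) nW_W124_u23] by auto
    have D_86: "u14 \<noteq> u24" using neqI[OF pos(22) nW_W134_u24] by auto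
    have D_87: "u14 \<noteq> u34" using neqI[OF pos(21) nW_W124_u34] by auto
    have D_88: "u14 \<noteq> X" using neqI[OF pos(21) tf[OF Esym[OF pos(17)] pos(18)]] by auto
    have D_89: "u14 \<noteq> W124" using Eneq[OF pos(21)] by auto
    have D_90: "u14 \<noteq> W134" using Eneq[OF pos(22)] by auto
    have D_91: "u14 \<noteq> W234" using neqI[OF pos(21) tf[OF Esym[OF pos(26)] pos(25)]] by auto
    have D_92: "u14 \<noteq> z" using not_sym[OF neqI[OF Esym[OF pos(32)] nW_W234_u14]] by auto
    have D_93: "u23 \<noteq> u24" using neqI[OF pos(23) nW_X_u24] by auto
    have D_94: "u23 \<noteq> u34" using neqI[OF pos(23) nW_X_u34] by auto
    have D_95: "u23 \<noteq> X" using Eneq[OF pos(23)] by auto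
    have D_96: "u23 \<noteq> W124" using neqI[OF pos(24) tf[OF pos(30) Esym[OF pos(32)]]] by auto
    have D_97: "u23 \<noteq> W134" using neqI[OF pos(24) tf[OF pos(31) Esym[OF pos(32)]]] by auto
    have D_98: "u23 \<noteq> W234" using Eneq[OF pos(24)] by auto
    have D_99: "u23 \<noteq> z" using not_sym[OF neqI[OF Esym[OF pos(30)] nW_W124_u23]] by auto
    have D_100: "u24 \<noteq> u34" using neqI[OF pos(25) nW_W124_u34] by auto
    have D_101: "u24 \<noteq> X" using neqI[OF pos(25) tf[OF Esym[OF pos(17)] pos(18)]] by auto
    have D_102: "u24 \<noteq> W124" using Eneq[OF pos(25)] by auto
    have D_103: "u24 \<noteq> W134" using neqI[OF pos(25) tf[OF Esym[OF pos(22)] pos(21)]] by auto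
    have D_104: "u24 \<noteq> W234" using Eneq[OF pos(26)] by auto
    have D_105: "u24 \<noteq> z" using not_sym[OF neqI[OF Esym[OF pos(31)] nW_W134_u24]] by auto
    have D_106: "u34 \<noteq> X" using neqI[OF pos(27) tf[OF pos(29) Esym[OF pos(31)]]] by auto
    have D_107: "u34 \<noteq> W124" using neqI[OF pos(27) tf[OF Esym[OF pos(21)] pos(22)]] by auto
    have D_108: "u34 \<noteq> W134" using Eneq[OF pos(27)] by auto
    have D_109: "u34 \<noteq> W234" using Eneq[OF pos(28)] by auto
    have D_110: "u34 \<noteq> z" using not_sym[OF neqI[OF Esym[OF pos(30)] nW_W124_u34]] by auto
    have D_111: "X \<noteq> W124" using neqI[OF Esym[OF pos(19)] nsym[OF nW_W124_u13]] by auto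
    have D_112: "X \<noteq> W134" using neqI[OF Esym[OF pos(17)] nsym[OF nW_W134_u12]] by auto
    have D_113: "X \<noteq> W234" using neqI[OF Esym[OF pos(17)] nsym[OF nW_W234_u12]] by auto
    have D_114: "X \<noteq> z" using Eneq[OF pos(29)] by auto
    have D_115: "W124 \<noteq> W134" using neqI[OF Esym[OF pos(18)] nsym[OF nW_W134_u12]] by auto
    have D_116: "W124 \<noteq> W234" using neqI[OF Esym[OF pos(18)] nsym[OF nW_W234_u12]] by auto
    have D_117: "W124 \<noteq> z" using Eneq[OF pos(30)] by auto
    have D_118: "W134 \<noteq> W234" using neqI[OF Esym[OF pos(20)] nsym[OF nW_W234_u13]] by auto
    have D_119: "W134 \<noteq> z" using Eneq[OF pos(31)] by auto
    have D_120: "W234 \<noteq> z" using Eneq[OF pos(32)] by auto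
    note D = D_1 D_2 D_3 D_4 D_5 D_6 D_7 D_8 D_9 D_10 D_11 D_12 D_13 D_14 D_15 D_16 D_17 D_18 D_19 D_20 D_21 D_22 D_23 D_24 D_25 D_26 D_27 D_28 D_29 D_30 D_31 D_32 D_33 D_34 D_35 D_36 D_37 D_38 D_39 D_40 D_41 D_42 D_43 D_44 D_45 D_46 D_47 D_48 D_49 D_50 D_51 D_52 D_53 D_54 D_55 D_56 D_57 D_58 D_59 D_60 D_61 D_62 D_63 D_64 D_65 D_66 D_67 D_68 D_69 D_70 D_71 D_72 D_73 D_74 D_75 D_76 D_77 D_78 D_79 D_80 D_81 D_82 D_83 D_84 D_85 D_86 D_87 D_88 D_89 D_90 D_91 D_92 D_93 D_94 D_95 D_96 D_97 D_98 D_99 D_100 D_101 D_102 D_103 D_104 D_105 D_106 D_107 D_108 D_109 D_110 D_111 D_112 D_113 D_114 D_115 D_116 D_117 D_118 D_119 D_120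
    have sym: "E a1 v" "E a2 v" "E a3 v" "E a4 v" "E u12 a1" "E u13 a1" "E u14 a1" "E u12 a2" "E u23 a2" "E u24 a2" "E u13 a3" "E u23 a3" "E u34 a3" "E u14 a4" "E u24 a4" "E u34 a4" "E X u12" "E W124 u12" "E X u13" "E W134 u13" "E W124 u14" "E W134 u14" "E X u23" "E W234 u23" "E W124 u24" "E W234 u24" "E W134 u34" "E W234 u34" "E z X" "E z W124" "E z W134" "E z W234"
      using Esym[OF pos(1)] Esym[OF pos(2)] Esym[OF pos(3)] Esym[OF pos(4)] Esym[OF pos(5)] Esym[OF pos(6)] Esym[OF pos(7)] Esym[OF pos(8)] Esym[OF pos(9)] Esym[OF pos(10)] Esym[OF pos(11)] Esym[OF pos(12)] Esym[OF pos(13)] Esym[OF pos(14)] Esym[OF pos(15)] Esym[OF pos(16)] Esym[OF pos(17)] Esym[OF pos(18)] Esym[OF pos(19)] Esym[OF pos(20)] Esym[OF pos(21)] Esym[OF pos(22)] Esym[OF pos(23)] Esym[OF pos(24)] Esym[OF pos(25)] Esym[OF pos(26)] Esym[OF pos(27)] Esym[OF pos(28)] Esym[OF pos(29)] Esym[OF pos(30)] Esym[OF pos(31)] Esym[OF pos(32)] by auto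
    have inV: "v \<in> V" "a1 \<in> V" "a2 \<in> V" "a3 \<in> V" "a4 \<in> V" "u12 \<in> V" "u13 \<in> V" "u14 \<in> V"
      "u23 \<in> V" "u24 \<in> V" "u34 \<in> V" "X \<in> V" "W124 \<in> V" "W134 \<in> V" "W234 \<in> V" "z \<in> V"
      using Ein1[OF pos(1)] Ein2[OF pos(1)] Ein2[OF pos(2)] Ein2[OF pos(3)] Ein2[OF pos(4)]
        Ein1[OF pos(17)] Ein1[OF pos(19)] Ein1[OF pos(21)] Ein1[OF pos(23)] Ein1[OF pos(25)] Ein1[OF pos(27)]
        Ein1[OF pos(29)] Ein1[OF pos(30)] Ein1[OF pos(31)] Ein1[OF pos(32)] Ein2[OF pos(32)] by auto
    define g where "g = (\<lambda>xs::bool list. hq v a1 a2 a3 a4 u12 u13 u14 u23 u24 u34 X W124 W134 W234 z (xs!0) (xs!1) (xs!2) (xs!3))"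
    show ?thesis
    proof (rule embed[where g = g])
      show "finite Q4_V"
      proof -
        have "Q4_V = {xs. set xs \<subseteq> (UNIV::bool set) \<and> length xs = 4}" by (simp add: Q4_V_def)
        thus ?thesis using finite_lists_length_eq[of "UNIV::bool set" 4] by simp
      qed
      show "Q4_V \<noteq> {}" by (auto simp: Q4_V_def intro!: exI[of _ "[True,True,True,True]"])
      show "\<And>x. x \<in> Q4_V \<Longrightarrow> card {y. Q4_E x y} = 4 \<and> {y. Q4_E x y} \<subseteq> Q4_V" by (rule Q4_reg)
      show "g ` Q4_V \<subseteq> V"
      proof
        fix y assume "y \<in> g ` Q4_V"
        then obtain a b c dd where "y = g [a,b,c,dd]" by (auto simp: Q4_V_def len4)
        thus "y \<in> V" using inV by (cases a; cases b; cases c; cases dd; simp add: g_def hq_def)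
      qed
      show "inj_on g Q4_V"
      proof -
        have Qe: "Q4_V = set [[False,False,False,False], [False,False,False,True], [False,False,True,False], [False,False,True,True], [False,True,False,False], [False,True,False,True], [False,True,True,False], [False,True,True,True], [True,False,False,False], [True,False,False,True], [True,False,True,False], [True,False,True,True], [True,True,False,False], [True,True,False,True], [True,True,True,False], [True,True,True,True]]"
        proof
          show "Q4_V \<subseteq> set [[False,False,False,False], [False,False,False,True], [False,False,True,False], [False,False,True,True], [False,True,False,False], [False,True,False,True], [False,True,True,False], [False,True,True,True], [True,False,False,False], [True,False,False,True], [True,False,True,False], [True,False,True,True], [True,True,False,False], [True,True,False,True], [True,True,True,False], [True,True,True,True]]"
          proof
            fix x assume "x \<in> Q4_V"
            then obtain a b c dd where "x = [a,b,c,dd]" unfolding Q4_V_def len4 by blast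
            thus "x \<in> set [[False,False,False,False], [False,False,False,True], [False,False,True,False], [False,False,True,True], [False,True,False,False], [False,True,False,True], [False,True,True,False], [False,True,True,True], [True,False,False,False], [True,False,False,True], [True,False,True,False], [True,False,True,True], [True,True,False,False], [True,True,False,True], [True,True,True,False], [True,True,True,True]]" by (cases a; cases b; cases c; cases dd; simp)
          qed
          show "set [[False,False,False,False], [False,False,False,True], [False,False,True,False], [False,False,True,True], [False,True,False,False], [False,True,False,True], [False,True,True,False], [False,True,True,True], [True,False,False,False], [True,False,False,True], [True,False,True,False], [True,False,True,True], [True,True,False,False], [True,True,False,True], [True,True,True,False], [True,True,True,True]] \<subseteq> Q4_V" by (simp add: Q4_V_def)
        qed
        have "distinct (map g [[False,False,False,False], [False,False,False,True], [False,False,True,False], [False,False,True,True], [False,True,False,False], [False,True,False,True], [False,True,True,False], [False,True,True,True], [True,False,False,False], [True,False,False,True], [True,False,True,False], [True,False,True,True], [True,True,False,False], [True,True,False,True], [True,True,True,False], [True,True,True,True]])" using D by (simp add: g_def hq_def)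
        thus ?thesis unfolding Qe by (simp add: distinct_map)
      qed
      have H: "E (g [a,b,c,dd]) (g [\<not>a,b,c,dd]) \<and> E (g [a,b,c,dd]) (g [a,\<not>b,c,dd]) \<and>
         E (g [a,b,c,dd]) (g [a,b,\<not>c,dd]) \<and> E (g [a,b,c,dd]) (g [a,b,c,\<not>dd])" for a b c dd
        by (cases a; cases b; cases c; cases dd; simp add: g_def hq_def pos sym)
      show "\<And>x y. x \<in> Q4_V \<Longrightarrow> y \<in> Q4_V \<Longrightarrow> Q4_E x y \<Longrightarrow> E (g x) (g y)"
      proof -
        fix x y assume "x \<in> Q4_V" "y \<in> Q4_V" "Q4_E x y"
        then obtain a b c dd where x: "x = [a,b,c,dd]" unfolding Q4_V_def len4 by blast
        hence "y \<in> {[\<not>a,b,c,dd], [a,\<not>b,c,dd], [a,b,\<not>c,dd], [a,b,c,\<not>dd]}"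
          using \<open>Q4_E x y\<close> Q4_nbrs by blast
        thus "E (g x) (g y)" using H[of a b c dd] unfolding x by blast
      qed
    qed
  qed
qed

end


context g4L2
begin

lemma caseBCH:
  assumes F: "frame v a1 a2 a3 a4 u12 u13 u14 u23 u24 u34"
  and X: "X \<noteq> a1" "E u12 X" "E X u13" and nX23: "\<not> E X u23"
  shows "graph_iso V E BCH_V BCH_E"
proof -
  note f = frame_E[OF F] and n = frame_F2[OF F] and du = frame_du[OF F]
  note d = f(1)
  have X12: "E X u12" using Esym[OF X(2)] .
  have X24: "E X u24" using L_path[OF F X12 X(3) X(1) nX23] .
  have X34: "E X u34" using L_path[OF frame_perm(1)[OF F] X(3) X12 X(1) nX23] .
  have "u12 \<noteq> u14" "u13 \<noteq> u14" "u12 \<noteq> u13" using du by auto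
  obtain Y where Y: "Y \<noteq> a1" "E u12 Y" "E Y u14" using quad[OF Esym[OF f(6)] f(10) \<open>u12 \<noteq> u14\<close>] by blast
  have uniqX: "X' = X" if "E X' u12" "E X' u13" "E X' u23" for X'
  proof -
    have "X' \<noteq> a1" using that(3) n(7) by auto
    thus ?thesis using U[OF Esym[OF f(6)] f(8) \<open>u12 \<noteq> u13\<close> _ X(1) Esym[OF that(1)] that(2) X(2) X(3)] by blast
  qed
  have nY24: "\<not> E Y u24"
  proof
    assume h: "E Y u24"
    obtain X' where "E X' u12" "E X' u13" "E X' u23"
      using L_tri[OF frame_perm(3)[OF F] Esym[OF Y(2)] Y(3) h] by blast
    thus False using uniqX nX23 by blast
  qed
  have Y23: "E Y u23" using L_path[OF frame_perm(3)[OF F] Esym[OF Y(2)] Y(3) Y(1) nY24] .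
  have Y34: "E Y u34" using L_path[OF frame_perm(4)[OF F] Y(3) Esym[OF Y(2)] Y(1) nY24] .
  obtain Z where Z: "Z \<noteq> a1" "E u13 Z" "E Z u14" using quad[OF Esym[OF f(8)] f(10) \<open>u13 \<noteq> u14\<close>] by blast
  have nZ34: "\<not> E Z u34"
  proof
    assume h: "E Z u34"
    obtain X' where "E X' u13" "E X' u12" "E X' u23"
      using L_tri[OF frame_perm(5)[OF F] Esym[OF Z(2)] Z(3) h] by blast
    thus False using uniqX nX23 by blast
  qed
  have Z23: "E Z u23" using L_path[OF frame_perm(5)[OF F] Esym[OF Z(2)] Z(3) Z(1) nZ34] .
  have Z24: "E Z u24" using L_path[OF frame_perm(6)[OF F] Z(3) Esym[OF Z(2)] Z(1) nZ34] .
    have pos: "E v a1" "E v a2" "E v a3" "E v a4" "E a1 u12" "E a2 u12" "E a1 u13" "E a3 u13" "E a1 u14" "E a4 u14" "E a2 u23" "E a3 u23" "E a2 u24" "E a4 u24" "E a3 u34" "E a4 u34" "E u12 X" "E u13 X" "E u24 X" "E u34 X" "E u12 Y" "E u14 Y" "E u23 Y" "E u34 Y" "E u13 Z" "E u14 Z" "E u23 Z" "E u24 Z"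
      using f X X24 X34 Y Y23 Y34 Z Z23 Z24 Esym by auto
    have D0: "X \<noteq> a1" "X \<noteq> a2" "X \<noteq> a3" "X \<noteq> a4" "Y \<noteq> a1" "Y \<noteq> a2" "Y \<noteq> a3" "Y \<noteq> a4" "Z \<noteq> a1" "Z \<noteq> a2" "Z \<noteq> a3" "Z \<noteq> a4"
      using neqI[OF Esym[OF pos(19)] n(9)] neqI[OF Esym[OF pos(18)] n(3)] neqI[OF Esym[OF pos(17)] n(1)] neqI[OF Esym[OF pos(17)] n(2)] neqI[OF Esym[OF pos(23)] n(7)] neqI[OF Esym[OF pos(22)] n(5)] neqI[OF Esym[OF pos(21)] n(1)] neqI[OF Esym[OF pos(21)] n(2)] neqI[OF Esym[OF pos(27)] n(7)] neqI[OF Esym[OF pos(25)] n(3)] neqI[OF Esym[OF pos(26)] n(6)] neqI[OF Esym[OF pos(25)] n(4)] by auto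
    have nv_X: "\<not> E X v" using L1n[OF Esym[OF pos(5)] Esym[OF pos(6)] pos(17) _ Esym[OF pos(1)] Esym[OF pos(2)]] d D0 f(18) by auto
    have nv_Y: "\<not> E Y v" using L1n[OF Esym[OF pos(5)] Esym[OF pos(6)] pos(21) _ Esym[OF pos(1)] Esym[OF pos(2)]] d D0 f(18) by auto
    have nv_Z: "\<not> E Z v" using L1n[OF Esym[OF pos(7)] Esym[OF pos(8)] pos(25) _ Esym[OF pos(1)] Esym[OF pos(3)]] d D0 f(19) by auto
    have nW_X: "\<not> E u14 X" using L1n[OF pos(5) pos(7) pos(9) _ pos(17) pos(18)] du D0 by auto
    have nW_Y: "\<not> E u13 Y" using L1n[OF pos(5) pos(9) pos(7) _ pos(21) pos(22)] du D0 by auto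
    have nW_Z: "\<not> E u12 Z" using L1n[OF pos(7) pos(9) pos(5) _ pos(25) pos(26)] du D0 by auto
    have D_1: "v \<noteq> a1" using Eneq[OF pos(1)] by auto
    have D_2: "v \<noteq> a2" using Eneq[OF pos(2)] by auto
    have D_3: "v \<noteq> a3" using Eneq[OF pos(3)] by auto
    have D_4: "v \<noteq> a4" using Eneq[OF pos(4)] by auto
    have D_5: "v \<noteq> u12" using not_sym[OF f(18)] by auto
    have D_6: "v \<noteq> u13" using not_sym[OF f(19)] by auto
    have D_7: "v \<noteq> u14" using not_sym[OF f(20)] by auto
    have D_8: "v \<noteq> u23" using not_sym[OF f(21)] by auto
    have D_9: "v \<noteq> u24" using not_sym[OF f(22)] by auto
    have D_10: "v \<noteq> u34" using not_sym[OF f(23)] by auto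
    have D_11: "v \<noteq> X" using neqI[OF pos(1) tf[OF Esym[OF pos(17)] Esym[OF pos(5)]]] by auto
    have D_12: "v \<noteq> Y" using neqI[OF pos(1) tf[OF Esym[OF pos(21)] Esym[OF pos(5)]]] by auto
    have D_13: "v \<noteq> Z" using neqI[OF pos(1) tf[OF Esym[OF pos(25)] Esym[OF pos(7)]]] by auto
    have D_14: "a1 \<noteq> a2" using d by auto
    have D_15: "a1 \<noteq> a3" using d by auto
    have D_16: "a1 \<noteq> a4" using d by auto
    have D_17: "a1 \<noteq> u12" using Eneq[OF pos(5)] by auto
    have D_18: "a1 \<noteq> u13" using Eneq[OF pos(7)] by auto
    have D_19: "a1 \<noteq> u14" using Eneq[OF pos(9)] by auto
    have D_20: "a1 \<noteq> u23" using neqI[OF pos(5) tf[OF pos(23) Esym[OF pos(21)]]] by auto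
    have D_21: "a1 \<noteq> u24" using neqI[OF pos(5) tf[OF pos(19) Esym[OF pos(17)]]] by auto
    have D_22: "a1 \<noteq> u34" using neqI[OF pos(5) tf[OF pos(20) Esym[OF pos(17)]]] by auto
    have D_23: "a1 \<noteq> X" using neqI[OF pos(9) nsym[OF nW_X]] by auto
    have D_24: "a1 \<noteq> Y" using neqI[OF pos(7) nsym[OF nW_Y]] by auto
    have D_25: "a1 \<noteq> Z" using neqI[OF pos(5) nsym[OF nW_Z]] by auto
    have D_26: "a2 \<noteq> a3" using d by auto
    have D_27: "a2 \<noteq> a4" using d by auto
    have D_28: "a2 \<noteq> u12" using Eneq[OF pos(6)] by auto
    have D_29: "a2 \<noteq> u13" using neqI[OF pos(6) tf[OF Esym[OF pos(7)] pos(5)]] by auto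
    have D_30: "a2 \<noteq> u14" using neqI[OF pos(6) tf[OF Esym[OF pos(9)] pos(5)]] by auto
    have D_31: "a2 \<noteq> u23" using Eneq[OF pos(11)] by auto
    have D_32: "a2 \<noteq> u24" using Eneq[OF pos(13)] by auto
    have D_33: "a2 \<noteq> u34" using neqI[OF pos(6) tf[OF pos(20) Esym[OF pos(17)]]] by auto
    have D_34: "a2 \<noteq> X" using neqI[OF pos(11) nX23] by auto
    have D_35: "a2 \<noteq> Y" using neqI[OF pos(13) nY24] by auto
    have D_36: "a2 \<noteq> Z" using neqI[OF pos(6) nsym[OF nW_Z]] by auto
    have D_37: "a3 \<noteq> a4" using d by auto
    have D_38: "a3 \<noteq> u12" using neqI[OF pos(8) tf[OF Esym[OF pos(5)] pos(7)]] by auto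
    have D_39: "a3 \<noteq> u13" using Eneq[OF pos(8)] by auto
    have D_40: "a3 \<noteq> u14" using neqI[OF pos(8) tf[OF Esym[OF pos(9)] pos(7)]] by auto
    have D_41: "a3 \<noteq> u23" using Eneq[OF pos(12)] by auto
    have D_42: "a3 \<noteq> u24" using neqI[OF pos(8) tf[OF pos(19) Esym[OF pos(18)]]] by auto
    have D_43: "a3 \<noteq> u34" using Eneq[OF pos(15)] by auto
    have D_44: "a3 \<noteq> X" using neqI[OF pos(12) nX23] by auto
    have D_45: "a3 \<noteq> Y" using neqI[OF pos(8) nsym[OF nW_Y]] by auto
    have D_46: "a3 \<noteq> Z" using neqI[OF pos(15) nZ34] by auto
    have D_47: "a4 \<noteq> u12" using neqI[OF pos(10) tf[OF Esym[OF pos(5)] pos(9)]] by auto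
    have D_48: "a4 \<noteq> u13" using neqI[OF pos(10) tf[OF Esym[OF pos(7)] pos(9)]] by auto
    have D_49: "a4 \<noteq> u14" using Eneq[OF pos(10)] by auto
    have D_50: "a4 \<noteq> u23" using neqI[OF pos(10) tf[OF pos(23) Esym[OF pos(22)]]] by auto
    have D_51: "a4 \<noteq> u24" using Eneq[OF pos(14)] by auto
    have D_52: "a4 \<noteq> u34" using Eneq[OF pos(16)] by auto
    have D_53: "a4 \<noteq> X" using neqI[OF pos(10) nsym[OF nW_X]] by auto
    have D_54: "a4 \<noteq> Y" using neqI[OF pos(14) nY24] by auto
    have D_55: "a4 \<noteq> Z" using neqI[OF pos(16) nZ34] by auto
    have D_56: "u12 \<noteq> u13" using neqI[OF pos(21) nW_Y] by auto
    have D_57: "u12 \<noteq> u14" using neqI[OF pos(17) nW_X] by auto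
    have D_58: "u12 \<noteq> u23" using neqI[OF pos(17) nsym[OF nX23]] by auto
    have D_59: "u12 \<noteq> u24" using neqI[OF pos(21) nsym[OF nY24]] by auto
    have D_60: "u12 \<noteq> u34" using neqI[OF Esym[OF pos(5)] nsym[OF n(11)]] by auto
    have D_61: "u12 \<noteq> X" using Eneq[OF pos(17)] by auto
    have D_62: "u12 \<noteq> Y" using Eneq[OF pos(21)] by auto
    have D_63: "u12 \<noteq> Z" using neqI[OF pos(17) tf[OF Esym[OF pos(25)] pos(18)]] by auto
    have D_64: "u13 \<noteq> u14" using neqI[OF pos(18) nW_X] by auto
    have D_65: "u13 \<noteq> u23" using neqI[OF pos(18) nsym[OF nX23]] by auto
    have D_66: "u13 \<noteq> u24" using neqI[OF Esym[OF pos(7)] nsym[OF n(9)]] by auto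
    have D_67: "u13 \<noteq> u34" using neqI[OF pos(25) nsym[OF nZ34]] by auto
    have D_68: "u13 \<noteq> X" using Eneq[OF pos(18)] by auto
    have D_69: "u13 \<noteq> Y" using neqI[OF pos(18) tf[OF Esym[OF pos(24)] pos(20)]] by auto
    have D_70: "u13 \<noteq> Z" using Eneq[OF pos(25)] by auto
    have D_71: "u14 \<noteq> u23" using neqI[OF Esym[OF pos(9)] nsym[OF n(7)]] by auto
    have D_72: "u14 \<noteq> u24" using neqI[OF pos(22) nsym[OF nY24]] by auto
    have D_73: "u14 \<noteq> u34" using neqI[OF pos(26) nsym[OF nZ34]] by auto
    have D_74: "u14 \<noteq> X" using neqI[OF pos(22) tf[OF Esym[OF pos(17)] pos(21)]] by auto
    have D_75: "u14 \<noteq> Y" using Eneq[OF pos(22)] by auto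
    have D_76: "u14 \<noteq> Z" using Eneq[OF pos(26)] by auto
    have D_77: "u23 \<noteq> u24" using neqI[OF pos(23) nsym[OF nY24]] by auto
    have D_78: "u23 \<noteq> u34" using neqI[OF pos(27) nsym[OF nZ34]] by auto
    have D_79: "u23 \<noteq> X" using neqI[OF pos(23) tf[OF Esym[OF pos(17)] pos(21)]] by auto
    have D_80: "u23 \<noteq> Y" using Eneq[OF pos(23)] by auto
    have D_81: "u23 \<noteq> Z" using Eneq[OF pos(27)] by auto
    have D_82: "u24 \<noteq> u34" using neqI[OF pos(28) nsym[OF nZ34]] by auto
    have D_83: "u24 \<noteq> X" using Eneq[OF pos(19)] by auto
    have D_84: "u24 \<noteq> Y" using neqI[OF pos(19) tf[OF Esym[OF pos(24)] pos(20)]] by auto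
    have D_85: "u24 \<noteq> Z" using Eneq[OF pos(28)] by auto
    have D_86: "u34 \<noteq> X" using Eneq[OF pos(20)] by auto
    have D_87: "u34 \<noteq> Y" using Eneq[OF pos(24)] by auto
    have D_88: "u34 \<noteq> Z" using neqI[OF pos(20) tf[OF Esym[OF pos(25)] pos(18)]] by auto
    have D_89: "X \<noteq> Y" using neqI[OF Esym[OF pos(18)] nsym[OF nW_Y]] by auto
    have D_90: "X \<noteq> Z" using neqI[OF Esym[OF pos(17)] nsym[OF nW_Z]] by auto
    have D_91: "Y \<noteq> Z" using neqI[OF Esym[OF pos(21)] nsym[OF nW_Z]] by auto
    note D = D_1 D_2 D_3 D_4 D_5 D_6 D_7 D_8 D_9 D_10 D_11 D_12 D_13 D_14 D_15 D_16 D_17 D_18 D_19 D_20 D_21 D_22 D_23 D_24 D_25 D_26 D_27 D_28 D_29 D_30 D_31 D_32 D_33 D_34 D_35 D_36 D_37 D_38 D_39 D_40 D_41 D_42 D_43 D_44 D_45 D_46 D_47 D_48 D_49 D_50 D_51 D_52 D_53 D_54 D_55 D_56 D_57 D_58 D_59 D_60 D_61 D_62 D_63 D_64 D_65 D_66 D_67 D_68 D_69 D_70 D_71 D_72 D_73 D_74 D_75 D_76 D_77 D_78 D_79 D_80 D_81 D_82 D_83 D_84 D_85 D_86 D_87 D_88 D_89 D_90 D_91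
    have sym: "E a1 v" "E a2 v" "E a3 v" "E a4 v" "E u12 a1" "E u12 a2" "E u13 a1" "E u13 a3" "E u14 a1" "E u14 a4" "E u23 a2" "E u23 a3" "E u24 a2" "E u24 a4" "E u34 a3" "E u34 a4" "E X u12" "E X u13" "E X u24" "E X u34" "E Y u12" "E Y u14" "E Y u23" "E Y u34" "E Z u13" "E Z u14" "E Z u23" "E Z u24"
      using Esym[OF pos(1)] Esym[OF pos(2)] Esym[OF pos(3)] Esym[OF pos(4)] Esym[OF pos(5)] Esym[OF pos(6)] Esym[OF pos(7)] Esym[OF pos(8)] Esym[OF pos(9)] Esym[OF pos(10)] Esym[OF pos(11)] Esym[OF pos(12)] Esym[OF pos(13)] Esym[OF pos(14)] Esym[OF pos(15)] Esym[OF pos(16)] Esym[OF pos(17)] Esym[OF pos(18)] Esym[OF pos(19)] Esym[OF pos(20)] Esym[OF pos(21)] Esym[OF pos(22)] Esym[OF pos(23)] Esym[OF pos(24)] Esym[OF pos(25)] Esym[OF pos(26)] Esym[OF pos(27)] Esym[OF pos(28)] by auto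
    have inV: "v \<in> V" "a1 \<in> V" "a2 \<in> V" "a3 \<in> V" "a4 \<in> V" "u12 \<in> V" "u13 \<in> V" "u14 \<in> V"
      "u23 \<in> V" "u24 \<in> V" "u34 \<in> V" "X \<in> V" "Y \<in> V" "Z \<in> V"
      using Ein1[OF pos(1)] Ein2[OF pos(1)] Ein2[OF pos(2)] Ein2[OF pos(3)] Ein2[OF pos(4)]
        Ein1[OF pos(17)] Ein1[OF pos(18)] Ein1[OF pos(22)] Ein1[OF pos(23)] Ein1[OF pos(19)] Ein1[OF pos(20)]
        Ein2[OF pos(17)] Ein2[OF pos(21)] Ein2[OF pos(25)] by auto
    define g where "g = (\<lambda>(b::bool,i::nat). if b then [X,a1,a2,a3,Y,a4,Z] ! i else [v,u23,u34,u14,u24,u13,u12] ! i)"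
    show ?thesis
    proof (rule embed[where g = g])
      show "finite BCH_V" "BCH_V \<noteq> {}" by (auto simp: BCH_V_eq)
      show "\<And>x. x \<in> BCH_V \<Longrightarrow> card {y. BCH_E x y} = 4 \<and> {y. BCH_E x y} \<subseteq> BCH_V" by (rule BCH_reg)
      show "g ` BCH_V \<subseteq> V" using inV by (auto simp: BCH_V_eq g_def)
      show "inj_on g BCH_V"
      proof -
        have Be: "BCH_V = set [(False,0),(False,1),(False,2),(False,3),(False,4),(False,5),(False,6),
          (True,0),(True,1),(True,2),(True,3),(True,4),(True,5),(True,6)]" by (simp add: BCH_V_eq)
        have "distinct (map g [(False,0),(False,1),(False,2),(False,3),(False,4),(False,5),(False,6),
          (True,0),(True,1),(True,2),(True,3),(True,4),(True,5),(True,6)])" using D by (simp add: g_def)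
        thus ?thesis unfolding Be by (simp add: distinct_map)
      qed
      show "\<And>x y. x \<in> BCH_V \<Longrightarrow> y \<in> BCH_V \<Longrightarrow> BCH_E x y \<Longrightarrow> E (g x) (g y)"
        unfolding BCH_V_eq by (elim insertE emptyE; simp add: BCH_E_def fano_inc_def g_def pos sym)
    qed
qed

end


lemma (in g4L2) caseL2: "graph_iso V E Q4_V Q4_E \<or> graph_iso V E BCH_V BCH_E"
proof -
  obtain v where v: "v \<in> V" using Vne by blast
  obtain a1 a2 a3 a4 where d: "distinct [a1,a2,a3,a4]" and N: "{u. E v u} = {a1,a2,a3,a4}"
    using obtain4[OF v] by blast
  have e: "E v a1" "E v a2" "E v a3" "E v a4" using N by auto
  have ee: "E a1 v" "E a2 v" "E a3 v" "E a4 v" using Esym[OF e(1)] Esym[OF e(2)] Esym[OF e(3)] Esym[OF e(4)] by auto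
  have nd: "a1 \<noteq> a2" "a1 \<noteq> a3" "a1 \<noteq> a4" "a2 \<noteq> a3" "a2 \<noteq> a4" "a3 \<noteq> a4" using d by auto
  obtain u12 where u12: "u12 \<noteq> v" "E a1 u12" "E u12 a2" using quad[OF ee(1) e(2) nd(1)] by blast
  obtain u13 where u13: "u13 \<noteq> v" "E a1 u13" "E u13 a3" using quad[OF ee(1) e(3) nd(2)] by blast
  obtain u14 where u14: "u14 \<noteq> v" "E a1 u14" "E u14 a4" using quad[OF ee(1) e(4) nd(3)] by blast
  obtain u23 where u23: "u23 \<noteq> v" "E a2 u23" "E u23 a3" using quad[OF ee(2) e(3) nd(4)] by blast
  obtain u24 where u24: "u24 \<noteq> v" "E a2 u24" "E u24 a4" using quad[OF ee(2) e(4) nd(5)] by blast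
  obtain u34 where u34: "u34 \<noteq> v" "E a3 u34" "E u34 a4" using quad[OF ee(3) e(4) nd(6)] by blast
  have F: "frame v a1 a2 a3 a4 u12 u13 u14 u23 u24 u34"
    unfolding frame_def using d e u12 u13 u14 u23 u24 u34
      Esym[OF u12(3)] Esym[OF u13(3)] Esym[OF u14(3)] Esym[OF u23(3)] Esym[OF u24(3)] Esym[OF u34(3)] by auto
  have "u12 \<noteq> u13" using frame_du[OF F] by auto
  obtain X where X: "X \<noteq> a1" "E u12 X" "E X u13" using quad[OF Esym[OF u12(2)] u13(2) \<open>u12 \<noteq> u13\<close>] by blast
  show ?thesis
  proof (cases "E X u23")
    case True thus ?thesis using caseQ4[OF F X] by blast
  next
    case False thus ?thesis using caseBCH[OF F X] by blast
  qed
qed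

theorem lemma4p1:
  fixes V :: "'a set" and E :: "'a \<Rightarrow> 'a \<Rightarrow> bool"
  assumes "fin_graph V E"
    and "connected_graph V E"
    and "regular V E 4"
    and "two_arc_transitive V E"
    and "girth V E \<le> 4"
  shows "(girth V E = 3 \<and> graph_iso V E K5_V K5_E)
       \<or> (girth V E = 4 \<and> graph_iso V E K44_V K44_E \<and> graph_iso V E C41_V C41_E)
       \<or> (girth V E = 4 \<and> (graph_iso V E K55m_V K55m_E \<or> graph_iso V E Q4_V Q4_E
                              \<or> graph_iso V E BCH_V BCH_E))"
proof -
  interpret g4t V E using assms by (unfold_locales) auto
  obtain n c where nc: "is_cycle V E n c" "n \<le> 4" using girth_le[OF assms(5)] by blast
  have n3: "3 \<le> n" using nc(1) by (simp add: is_cycle_def)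
  have cyc_ge3: "3 \<le> m" if "is_cycle V E m c'" for m c' using that by (simp add: is_cycle_def)
  show ?thesis
  proof (cases "\<exists>x y z. E x y \<and> E y z \<and> E x z")
    case True
    then obtain x y z where t: "E x y" "E y z" "E x z" by blast
    have xz: "x \<noteq> z" using Eneq[OF t(3)] .
    have cl: "E a c" if "E a b" "E b c" "a \<noteq> c" for a b c
      using tr_tri[OF t(1) t(2) xz t(3) that] .
    have iso: "graph_iso V E K5_V K5_E" by (rule caseK5) (rule cl; assumption)
    have "distinct [x,y,z]" using Eneq[OF t(1)] Eneq[OF t(2)] xz by auto
    hence "is_cycle V E 3 (\<lambda>i. [x,y,z] ! i)"
      using tri_cyc[where E=E and V=V, OF t(1) t(2) Esym[OF t(3)]] Ein1[OF t(1)] Ein2[OF t(1)] Ein2[OF t(2)] by blast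
    hence "girth V E = enat 3" using cyc_ge3 by (intro girth_eq) auto
    hence "girth V E = 3" by (simp add: numeral_eq_enat)
    thus ?thesis using iso by blast
  next
    case False
    hence tf: "\<And>x y z. E x y \<Longrightarrow> E y z \<Longrightarrow> \<not> E x z" by blast
    have no3: "\<not> is_cycle V E 3 c'" for c'
    proof
      assume "is_cycle V E 3 c'"
      from cyc3[OF this] show False using tf Esym by blast
    qed
    have n4: "n = 4" using n3 nc no3 by (cases "n = 3") auto
    have cy: "E (c 0) (c 1) \<and> E (c 1) (c 2) \<and> E (c 2) (c 3) \<and> E (c 3) (c 0) \<and> distinct [c 0, c 1, c 2, c 3]"
      using cyc4 nc(1) n4 by blast
    have quad: "\<exists>w. w \<noteq> b \<and> E a w \<and> E w cc" if "E a b" "E b cc" "a \<noteq> cc" for a b cc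
      using tr_q1[of "c 0" "c 1" "c 2" "c 3" a b cc] cy Esym that by auto
    have "girth V E = enat 4"
    proof (rule girth_eq)
      show "4 \<in> {n. \<exists>c. is_cycle V E n c}" using nc n4 by blast
      show "4 \<le> m" if "is_cycle V E m c'" for m c'
        using cyc_ge3[OF that] no3 that by (cases "m = 3") auto
    qed
    hence g4: "girth V E = 4" by (simp add: numeral_eq_enat)
    show ?thesis
    proof (cases "\<exists>a b cc w1 w2 w3. E a b \<and> E b cc \<and> a \<noteq> cc \<and> distinct [b,w1,w2,w3] \<and>
       E a w1 \<and> E w1 cc \<and> E a w2 \<and> E w2 cc \<and> E a w3 \<and> E w3 cc")
      case True
      then obtain a b cc w1 w2 w3 where h: "E a b" "E b cc" "a \<noteq> cc" "distinct [b,w1,w2,w3]"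
        "E a w1" "E w1 cc" "E a w2" "E w2 cc" "E a w3" "E w3 cc" by blast
      have "graph_iso V E K44_V K44_E \<and> graph_iso V E C41_V C41_E"
        by (rule caseK44) (rule tr_q3[OF h])
      thus ?thesis using g4 by blast
    next
      case nP4: False
      show ?thesis
      proof (cases "\<exists>a b cc w1 w2. E a b \<and> E b cc \<and> a \<noteq> cc \<and> distinct [b,w1,w2] \<and>
         E a w1 \<and> E w1 cc \<and> E a w2 \<and> E w2 cc")
        case True
        then obtain a b cc w1 w2 where h: "E a b" "E b cc" "a \<noteq> cc" "distinct [b,w1,w2]"
          "E a w1" "E w1 cc" "E a w2" "E w2 cc" by blast
        have "graph_iso V E K55m_V K55m_E"
        proof (rule caseK55)
          show "\<And>x y z. E x y \<Longrightarrow> E y z \<Longrightarrow> \<not> E x z" by (rule tf)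
          show "\<And>a' b' c'. E a' b' \<Longrightarrow> E b' c' \<Longrightarrow> a' \<noteq> c' \<Longrightarrow> \<exists>w1 w2. distinct [b',w1,w2] \<and>
             E a' w1 \<and> E w1 c' \<and> E a' w2 \<and> E w2 c'" by (rule tr_q2[OF h])
          show "\<And>a b c w1 w2 w3. E a b \<Longrightarrow> E b c \<Longrightarrow> a \<noteq> c \<Longrightarrow> distinct [b,w1,w2,w3] \<Longrightarrow>
             E a w1 \<Longrightarrow> E w1 c \<Longrightarrow> E a w2 \<Longrightarrow> E w2 c \<Longrightarrow> E a w3 \<Longrightarrow> E w3 c \<Longrightarrow> False"
            using nP4 by blast
        qed
        thus ?thesis using g4 by blast
      next
        case nP3: False
        have U: "w1 = w2" if "E x y" "E y z" "x \<noteq> z" "w1 \<noteq> y" "w2 \<noteq> y"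
          "E x w1" "E w1 z" "E x w2" "E w2 z" for x y z w1 w2
        proof (rule ccontr)
          assume "w1 \<noteq> w2"
          hence "distinct [y,w1,w2]" using that by auto
          thus False using nP3 that by blast
        qed
        interpret g4L2 V E
          by (unfold_locales) (use tf quad U in blast)+
        show ?thesis using caseL2 g4 by blast
      qed
    qed
  qed
qed


end
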